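(* Let $\Gamma$ be a canonical signed unicyclic graph of order $n$ whose unique cycle $C_g^\sigma$ has length $g$. (1) If $\Gamma=C_g^\sigma$ is a cycle, then $\eta(\Gamma)=n-g$ (i.e. $A(\Gamma)$ is nonsingular) if and only if $g$ is odd, or $C_g^\sigma$ is balanced and $g\equiv 2\pmod 4$, or $C_g^\sigma$ is unbalanced and $g\equiv 0\pmod 4$. (2) If $\Gamma$ is not a cycle, let $v_1,\dots,v_k$ ($k\ge1$) be the major vertices in cyclic order along $C_g^\sigma$ and let $l_1,\dots,l_k\ge0$ be the numbers of cycle vertices strictly between consecutive major vertices (indices mod $k$; for $k=1$, $l_1=g-1$). Then $\eta(\Gamma)=n-g$ if and only if $g$ is even and all of $l_1,\dots,l_k$ are odd.
   Context: A signed graph $\Gamma=(G,\sigma)$ is a simple graph $G$ with a sign function $\sigma:E(G)\to\{+,-\}$; its adjacency matrix has $(u,v)$-entry $\sigma(uv)$ if $uv\in E(G)$, $0$ otherwise, and $\eta(\Gamma)$ is the multiplicity of the eigenvalue $0$. A cycle is balanced if the product of its edge signs is $+$, unbalanced otherwise. A signed unicyclic graph is a connected signed graph with exactly one cycle. It is called canonical if, with $C$ its unique cycle, every vertex not on $C$ is adjacent to exactly one vertex of $C$ and the vertices not on $C$ are pairwise nonadjacent. A vertex of $C$ having at least one neighbour outside $C$ is called a major vertex. *)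

theory Defs
  imports "Jordan_Normal_Form.Char_Poly"
begin

definition simple_graph :: "nat \<Rightarrow> (nat \<Rightarrow> nat \<Rightarrow> bool) \<Rightarrow> bool" where
  "simple_graph n E \<longleftrightarrow>
     (\<forall>u v. E u v \<longrightarrow> u < n \<and> v < n \<and> u \<noteq> v \<and> E v u)"

definition signed_graph :: "nat \<Rightarrow> (nat \<Rightarrow> nat \<Rightarrow> bool) \<Rightarrow> (nat \<Rightarrow> nat \<Rightarrow> real) \<Rightarrow> bool" where
  "signed_graph n E sg \<longleftrightarrow> simple_graph n E \<and>
     (\<forall>u v. E u v \<longrightarrow> sg u v \<in> {1, -1} \<and> sg u v = sg v u)"

definition adj_matrix :: "nat \<Rightarrow> (nat \<Rightarrow> nat \<Rightarrow> bool) \<Rightarrow> (nat \<Rightarrow> nat \<Rightarrow> real) \<Rightarrow> real mat" where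
  "adj_matrix n E sg = mat n n (\<lambda>(i, j). if E i j then sg i j else 0)"

definition nullity :: "nat \<Rightarrow> (nat \<Rightarrow> nat \<Rightarrow> bool) \<Rightarrow> (nat \<Rightarrow> nat \<Rightarrow> real) \<Rightarrow> nat" where
  "nullity n E sg = order 0 (char_poly (adj_matrix n E sg))"

definition connected_graph :: "nat \<Rightarrow> (nat \<Rightarrow> nat \<Rightarrow> bool) \<Rightarrow> bool" where
  "connected_graph n E \<longleftrightarrow> (\<forall>u<n. \<forall>v<n. E\<^sup>*\<^sup>* u v)"

definition is_cycle :: "(nat \<Rightarrow> nat \<Rightarrow> bool) \<Rightarrow> nat list \<Rightarrow> bool" where
  "is_cycle E cs \<longleftrightarrow> length cs \<ge> 3 \<and> distinct cs \<and>
     (\<forall>i < length cs. E (cs ! i) (cs ! ((i + 1) mod length cs)))"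

definition cycle_edges :: "nat list \<Rightarrow> nat set set" where
  "cycle_edges cs = {{cs ! i, cs ! ((i + 1) mod length cs)} | i. i < length cs}"

definition unicyclic_with :: "nat \<Rightarrow> (nat \<Rightarrow> nat \<Rightarrow> bool) \<Rightarrow> nat list \<Rightarrow> bool" where
  "unicyclic_with n E cs \<longleftrightarrow> connected_graph n E \<and> is_cycle E cs \<and>
     (\<forall>ds. is_cycle E ds \<longrightarrow> cycle_edges ds = cycle_edges cs)"

definition canonical_with :: "nat \<Rightarrow> (nat \<Rightarrow> nat \<Rightarrow> bool) \<Rightarrow> nat list \<Rightarrow> bool" where
  "canonical_with n E cs \<longleftrightarrow> unicyclic_with n E cs \<and>
     (\<forall>v<n. v \<notin> set cs \<longrightarrow> (\<exists>!c. c \<in> set cs \<and> E v c)) \<and>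
     (\<forall>u<n. \<forall>v<n. u \<notin> set cs \<longrightarrow> v \<notin> set cs \<longrightarrow> \<not> E u v)"

definition balanced_cycle :: "(nat \<Rightarrow> nat \<Rightarrow> real) \<Rightarrow> nat list \<Rightarrow> bool" where
  "balanced_cycle sg cs \<longleftrightarrow>
     (\<Prod>i<length cs. sg (cs ! i) (cs ! ((i + 1) mod length cs))) = 1"

definition major_vertex :: "nat \<Rightarrow> (nat \<Rightarrow> nat \<Rightarrow> bool) \<Rightarrow> nat list \<Rightarrow> nat \<Rightarrow> bool" where
  "major_vertex n E cs v \<longleftrightarrow> v \<in> set cs \<and> (\<exists>w<n. w \<notin> set cs \<and> E v w)"

definition major_positions :: "nat \<Rightarrow> (nat \<Rightarrow> nat \<Rightarrow> bool) \<Rightarrow> nat list \<Rightarrow> nat list" where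
  "major_positions n E cs =
     sorted_list_of_set {i. i < length cs \<and> major_vertex n E cs (cs ! i)}"

text \<open>l_i: number of cycle vertices strictly between the i-th and the (i+1)-th
(indices mod k) major vertex, going along cs. For k = 1 this is g - 1.\<close>
definition gap :: "nat \<Rightarrow> (nat \<Rightarrow> nat \<Rightarrow> bool) \<Rightarrow> nat list \<Rightarrow> nat \<Rightarrow> int" where
  "gap n E cs i = (let ms = major_positions n E cs; k = length ms in
     (int (ms ! ((i + 1) mod k)) - int (ms ! i) - 1) mod int (length cs))"

end

theory Submission
  imports Defs "Jordan_Normal_Form.Jordan_Normal_Form_Uniqueness" "Jordan_Normal_Form.Jordan_Normal_Form_Existence"
begin


lemma order_of_real_poly: "Polynomial.order 0 (map_poly (of_real :: real \<Rightarrow> complex) p) = Polynomial.order 0 p"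
proof -
  have "map_poly_inj_idom_divide_hom (of_real :: real \<Rightarrow> complex)"
    by (unfold_locales)
  from map_poly_inj_idom_divide_hom.order_hom[OF this, of 0 p] show ?thesis by simp
qed

lemma sum_list_min12:
  fixes xs :: "nat list"
  assumes "sum_list (map (min 1) xs) = sum_list (map (min 2) xs)"
  shows "sum_list xs = sum_list (map (min 1) xs)"
  using assms
proof (induct xs)
  case (Cons x xs)
  have a: "sum_list (map (min 1) xs) \<le> sum_list (map (min 2) xs)"
    by (induct xs) auto
  have "min 1 x \<le> min 2 x" by auto
  with Cons.prems a have "min (1::nat) x = min 2 x" and "sum_list (map (min 1) xs) = sum_list (map (min 2) xs)"
    by auto
  with Cons.hyps show ?case by auto
qed simp


lemma kernel_sq_symmetric:
  fixes A :: "real mat"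
  assumes A: "A \<in> carrier_mat n n" and sym: "\<And>i j. i < n \<Longrightarrow> j < n \<Longrightarrow> A $$ (i,j) = A $$ (j,i)"
  defines "B \<equiv> map_mat complex_of_real A"
  assumes v: "v \<in> carrier_vec n" and z: "B *\<^sub>v (B *\<^sub>v v) = 0\<^sub>v n"
  shows "B *\<^sub>v v = 0\<^sub>v n"
proof -
  define w where "w = B *\<^sub>v v"
  have B: "B \<in> carrier_mat n n" using A unfolding B_def by auto
  have w: "w \<in> carrier_vec n" unfolding w_def using B v by auto
  have wi: "w $ i = (\<Sum>j<n. B $$ (i,j) * v $ j)" if "i < n" for i
  proof -
    have "w $ i = row B i \<bullet> v" unfolding w_def using that B by simp
    also have "\<dots> = (\<Sum>j<n. B $$ (i,j) * v $ j)" unfolding scalar_prod_def using that B v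
      by (simp add: atLeast0LessThan)
    finally show ?thesis .
  qed
  have bwj: "(\<Sum>i<n. B $$ (j,i) * w $ i) = 0" if "j < n" for j
  proof -
    have "(B *\<^sub>v w) $ j = 0" using z that unfolding w_def by simp
    moreover have "(B *\<^sub>v w) $ j = row B j \<bullet> w" using that B by simp
    moreover have "\<dots> = (\<Sum>i<n. B $$ (j,i) * w $ i)" unfolding scalar_prod_def using that B w
      by (simp add: atLeast0LessThan)
    ultimately show ?thesis by simp
  qed
  have Bsym: "B $$ (i,j) = cnj (B $$ (j,i))" if "i < n" "j < n" for i j
    using that A sym[OF that] unfolding B_def by auto
  have "(\<Sum>i<n. cnj (w $ i) * w $ i) = (\<Sum>i<n. \<Sum>j<n. cnj (w $ i) * (B $$ (i,j) * v $ j))"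
    by (simp add: wi sum_distrib_left)
  also have "\<dots> = (\<Sum>j<n. \<Sum>i<n. cnj (w $ i) * (B $$ (i,j) * v $ j))"
    by (rule sum.swap)
  also have "\<dots> = (\<Sum>j<n. cnj (\<Sum>i<n. B $$ (j,i) * w $ i) * v $ j)"
  proof (intro sum.cong refl)
    fix j assume j: "j \<in> {..<n}"
    have "(\<Sum>i<n. cnj (w $ i) * (B $$ (i,j) * v $ j)) = (\<Sum>i<n. cnj (B $$ (j,i) * w $ i) * v $ j)"
    proof (intro sum.cong refl)
      fix i assume i: "i \<in> {..<n}"
      show "cnj (w $ i) * (B $$ (i,j) * v $ j) = cnj (B $$ (j,i) * w $ i) * v $ j"
        using Bsym[of i j] i j by simp
    qed
    also have "\<dots> = cnj (\<Sum>i<n. B $$ (j,i) * w $ i) * v $ j"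
      by (simp add: sum_distrib_right)
    finally show "(\<Sum>i<n. cnj (w $ i) * (B $$ (i,j) * v $ j)) = cnj (\<Sum>i<n. B $$ (j,i) * w $ i) * v $ j" .
  qed
  also have "\<dots> = 0" using bwj by simp
  finally have s: "(\<Sum>i<n. cnj (w $ i) * w $ i) = 0" .
  have cc: "\<And>z::complex. cnj z * z = of_real ((cmod z)^2)"
    by (metis complex_norm_square mult.commute)
  have "complex_of_real (\<Sum>i<n. (cmod (w $ i))^2) = (\<Sum>i<n. cnj (w $ i) * w $ i)"
    unfolding of_real_sum cc ..
  hence "complex_of_real (\<Sum>i<n. (cmod (w $ i))^2) = 0" using s by (simp only:)
  hence "(\<Sum>i<n. (cmod (w $ i))^2) = 0" by (simp only: of_real_eq_0_iff)
  hence "\<forall>i\<in>{..<n}. (cmod (w $ i))^2 = 0"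
    by (subst sum_nonneg_eq_0_iff[symmetric]) auto
  hence "\<And>i. i < n \<Longrightarrow> w $ i = 0" by auto
  thus ?thesis unfolding w_def[symmetric] using w by (intro eq_vecI) auto
qed
lemma order0_kernel_dim:
  fixes A :: "real mat"
  assumes A: "A \<in> carrier_mat n n" and sym: "\<And>i j. i < n \<Longrightarrow> j < n \<Longrightarrow> A $$ (i,j) = A $$ (j,i)"
  shows "Polynomial.order 0 (char_poly A) = kernel_dim (map_mat complex_of_real A)"
proof -
  define B where "B = map_mat complex_of_real A"
  have B: "B \<in> carrier_mat n n" using A unfolding B_def by auto
  have "Polynomial.order 0 (char_poly A) = Polynomial.order 0 (char_poly B)"
    unfolding B_def of_real_hom.char_poly_hom[OF A] order_of_real_poly ..
  from char_poly_factorized[OF B] obtain as where "char_poly B = (\<Prod>a\<leftarrow>as. [:- a, 1:])" by auto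
  from jordan_nf_exists[OF B this] obtain n_as where jnf: "jordan_nf B n_as" by auto
  let ?xs = "map fst [(n, e)\<leftarrow>n_as . e = 0]"
  have o: "Polynomial.order 0 (char_poly B) = sum_list ?xs"
    unfolding jordan_nf_order[OF jnf] by (induct n_as) auto
  have cm: "char_matrix B 0 = B" unfolding char_matrix_def using B by auto
  have p1: "B ^\<^sub>m 1 = B" using B by simp
  have p2: "B ^\<^sub>m 2 = B * B" using B by (simp add: numeral_2_eq_2)
  have d1: "dim_gen_eigenspace B 0 1 = kernel_dim B"
    unfolding dim_gen_eigenspace_def cm p1 ..
  have ker: "mat_kernel (B * B) = mat_kernel B"
  proof
    show "mat_kernel B \<subseteq> mat_kernel (B * B)" by (rule mat_kernel_mult_subset[OF B B])
    show "mat_kernel (B * B) \<subseteq> mat_kernel B"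
    proof
      fix v assume "v \<in> mat_kernel (B * B)"
      have BB: "B * B \<in> carrier_mat n n" using B by auto
      from mat_kernelD[OF BB \<open>v \<in> mat_kernel (B * B)\<close>] have v: "v \<in> carrier_vec n" and "B * B *\<^sub>v v = 0\<^sub>v n" by auto
      hence "B *\<^sub>v (B *\<^sub>v v) = 0\<^sub>v n" using B by (simp add: assoc_mult_mat_vec)
      from kernel_sq_symmetric[OF A sym v this[unfolded B_def]] 
      have "B *\<^sub>v v = 0\<^sub>v n" unfolding B_def by auto
      thus "v \<in> mat_kernel B" by (intro mat_kernelI[OF B v])
    qed
  qed
  have d2: "dim_gen_eigenspace B 0 2 = kernel_dim B"
    unfolding dim_gen_eigenspace_def cm p2 kernel_dim_def ker using B by simp
  have "sum_list (map (min 1) ?xs) = sum_list (map (min 2) ?xs)"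
    using dim_gen_eigenspace[OF jnf, of 0 1] dim_gen_eigenspace[OF jnf, of 0 2] d1 d2
    by (simp add: comp_def)
  from sum_list_min12[OF this] have "sum_list ?xs = kernel_dim B"
    using dim_gen_eigenspace[OF jnf, of 0 1] d1 by (simp add: comp_def)
  with o show ?thesis unfolding B_def
    using \<open>Polynomial.order 0 (char_poly A) = Polynomial.order 0 (char_poly B)\<close> B_def by simp
qed



lemma kernel_dim_lower:
  fixes M :: "'a::field mat"
  assumes M: "M \<in> carrier_mat n n" and T: "T \<subseteq> {..<n}"
  and W: "\<And>t. t \<in> T \<Longrightarrow> W t \<in> mat_kernel M"
  and diag: "\<And>t. t \<in> T \<Longrightarrow> W t $ t \<noteq> 0"
  and off: "\<And>t t'. t \<in> T \<Longrightarrow> t' \<in> T \<Longrightarrow> t' \<noteq> t \<Longrightarrow> W t $ t' = 0"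
  shows "card T \<le> kernel_dim M"
proof -
  interpret K: kernel n n M by (unfold_locales, rule M)
  have finT: "finite T" using T finite_subset by blast
  define S where "S = W ` T"
  have SK: "S \<subseteq> mat_kernel M" unfolding S_def using W by auto
  have SC: "S \<subseteq> carrier_vec n" using SK mat_kernel_carrier[OF M] by auto
  have finS: "finite S" unfolding S_def using finT by auto
  have injW: "inj_on W T"
  proof
    fix t t' assume "t \<in> T" "t' \<in> T" "W t = W t'"
    thus "t = t'" using diag off by metis
  qed
  have cardS: "card S = card T" unfolding S_def using card_image[OF injW] .
  have "K.NC.lin_indpt S"
  proof (rule K.NC.finite_lin_indpt2[OF finS])
    show "S \<subseteq> carrier_vec n" using SC by simp
    fix a assume lc: "K.NC.lincomb a S = 0\<^sub>v n"
    show "\<forall>v\<in>S. a v = 0"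
    proof
      fix v assume "v \<in> S"
      then obtain t where t: "t \<in> T" and v: "v = W t" unfolding S_def by auto
      have tn: "t < n" using T t by auto
      have "K.NC.lincomb a S $ t = (\<Sum>x\<in>S. a x * x $ t)"
        by (rule K.NC.lincomb_index[OF tn SC])
      also have "\<dots> = a v * v $ t"
      proof (rule sum.remove[OF finS \<open>v \<in> S\<close>, THEN trans], simp)
        show "(\<Sum>x\<in>S - {v}. a x * x $ t) = 0"
        proof (rule sum.neutral, intro ballI)
          fix x assume "x \<in> S - {v}"
          then obtain t' where t': "t' \<in> T" "x = W t'" "t' \<noteq> t" unfolding S_def v by auto
          show "a x * x $ t = 0" using off[OF t'(1) t t'(3)[symmetric]] t' by simp
        qed
      qed
      finally have "a v * v $ t = 0" using lc tn by simp
      thus "a v = 0" using diag[OF t] v by simp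
    qed
  qed
  hence li: "K.lin_indpt S" using K.lindep_same[OF SK] by simp
  obtain B where "finite B" "K.basis B" using kernel_basis_exists[OF M] by auto
  hence fd: "K.Ker.fin_dim" unfolding K.Ker.fin_dim_def K.Ker.basis_def by auto
  have "card S \<le> K.dim" using K.Ker.li_le_dim(2)[OF fd _ li] SK by simp
  thus ?thesis using cardS by simp
qed



lemma kernel_dim_upper:
  fixes M :: "'a::field mat"
  assumes M: "M \<in> carrier_mat n n" and T: "T \<subseteq> {..<n}"
  and inj: "\<And>x. x \<in> mat_kernel M \<Longrightarrow> (\<forall>t\<in>T. x $ t = 0) \<Longrightarrow> x = 0\<^sub>v n"
  shows "kernel_dim M \<le> card T"
proof -
  interpret K: kernel n n M by (unfold_locales, rule M)
  define m where "m = card T"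
  have finT: "finite T" using T finite_subset by blast
  obtain h where h: "bij_betw h {0..<m} T" using ex_bij_betw_nat_finite[OF finT] unfolding m_def by auto
  interpret Vm: vec_space "TYPE('a)" m .
  obtain B where finB: "finite B" and bas: "K.basis B" using kernel_basis_exists[OF M] by auto
  have BK: "B \<subseteq> mat_kernel M" using bas unfolding K.Ker.basis_def by auto
  have BC: "B \<subseteq> carrier_vec n" using BK mat_kernel_carrier[OF M] by auto
  have dimB: "K.dim = card B" using K.Ker.dim_basis[OF finB bas] .
  have liB: "K.NC.lin_indpt B" using bas K.lindep_same[OF BK] unfolding K.Ker.basis_def by simp
  define \<pi> where "\<pi> x = vec m (\<lambda>i. x $ h i)" for x :: "'a vec"
  have hT: "h i \<in> T" if "i < m" for i using h that unfolding bij_betw_def by auto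
  have Tex: "\<exists>i<m. t = h i" if "t \<in> T" for t using h that unfolding bij_betw_def by force
  have ker_zero: "x = y" if x: "x \<in> mat_kernel M" and y: "y \<in> mat_kernel M" and e: "\<And>t. t \<in> T \<Longrightarrow> x $ t = y $ t" for x y
  proof -
    have xc: "x \<in> carrier_vec n" and yc: "y \<in> carrier_vec n" using x y mat_kernel_carrier[OF M] by auto
    have "x - y \<in> mat_kernel M"
    proof (rule mat_kernelI[OF M])
      show "x - y \<in> carrier_vec n" using xc yc by simp
      have "M *\<^sub>v (x - y) = M *\<^sub>v x - M *\<^sub>v y" using M xc yc by (simp add: mult_minus_distrib_mat_vec)
      also have "\<dots> = 0\<^sub>v n" using mat_kernelD[OF M x] mat_kernelD[OF M y] by simp
      finally show "M *\<^sub>v (x - y) = 0\<^sub>v n" .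
    qed
    moreover have "\<forall>t\<in>T. (x - y) $ t = 0" using e T yc by auto
    ultimately have "x - y = 0\<^sub>v n" by (rule inj)
    show ?thesis
    proof (rule eq_vecI)
      show "dim_vec x = dim_vec y" using xc yc by simp
      fix i assume "i < dim_vec y"
      hence i: "i < n" using yc by simp
      have "(x - y) $ i = 0" using \<open>x - y = 0\<^sub>v n\<close> i by simp
      thus "x $ i = y $ i" using i xc yc by simp
    qed
  qed
  have inj\<pi>: "inj_on \<pi> B"
  proof
    fix x y assume "x \<in> B" "y \<in> B" "\<pi> x = \<pi> y"
    show "x = y"
    proof (rule ker_zero)
      show "x \<in> mat_kernel M" "y \<in> mat_kernel M" using BK \<open>x \<in> B\<close> \<open>y \<in> B\<close> by auto
      fix t assume "t \<in> T"
      then obtain i where i: "i < m" "t = h i" using Tex by auto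
      have "\<pi> x $ i = \<pi> y $ i" using \<open>\<pi> x = \<pi> y\<close> by simp
      thus "x $ t = y $ t" using i unfolding \<pi>_def by simp
    qed
  qed
  define P where "P = \<pi> ` B"
  have PC: "P \<subseteq> carrier_vec m" unfolding P_def \<pi>_def by auto
  have finP: "finite P" unfolding P_def using finB by auto
  have "Vm.lin_indpt P"
  proof (rule Vm.finite_lin_indpt2[OF finP])
    show "P \<subseteq> carrier_vec m" using PC by simp
    fix a assume lc: "Vm.lincomb a P = 0\<^sub>v m"
    define y where "y = K.NC.lincomb (a \<circ> \<pi>) B"
    have yK: "y \<in> mat_kernel M"
    proof -
      have "K.lincomb (a \<circ> \<pi>) B \<in> mat_kernel M"
        using K.Ker.lincomb_closed[of B "a \<circ> \<pi>"] BK by simp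
      thus ?thesis unfolding y_def using K.lincomb_same[OF BK] by simp
    qed
    have "y = 0\<^sub>v n"
    proof (rule inj[OF yK], intro ballI)
      fix t assume "t \<in> T"
      then obtain i where i: "i < m" "t = h i" using Tex by auto
      have tn: "t < n" using T \<open>t \<in> T\<close> by auto
      have "y $ t = (\<Sum>b\<in>B. (a \<circ> \<pi>) b * b $ t)" unfolding y_def by (rule K.NC.lincomb_index[OF tn BC])
      also have "\<dots> = (\<Sum>b\<in>B. a (\<pi> b) * \<pi> b $ i)" using i unfolding \<pi>_def by simp
      also have "\<dots> = (\<Sum>p\<in>P. a p * p $ i)" unfolding P_def by (rule sum.reindex[OF inj\<pi>, symmetric, unfolded comp_def])
      also have "\<dots> = Vm.lincomb a P $ i" by (rule Vm.lincomb_index[OF i(1) PC, symmetric])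
      also have "\<dots> = 0" using lc i by simp
      finally show "y $ t = 0" .
    qed
    hence lc0: "K.NC.lincomb (a \<circ> \<pi>) B = 0\<^sub>v n" unfolding y_def .
    have "\<forall>b\<in>B. (a \<circ> \<pi>) b = 0"
    proof (rule ccontr)
      assume "\<not> (\<forall>b\<in>B. (a \<circ> \<pi>) b = 0)"
      then obtain b where "b \<in> B" "(a \<circ> \<pi>) b \<noteq> 0" by auto
      hence "K.NC.lin_dep B" unfolding K.NC.lin_dep_def using finB lc0
        by (intro exI[of _ B] exI[of _ "a \<circ> \<pi>"] exI[of _ b]) auto
      with liB show False by simp
    qed
    thus "\<forall>v\<in>P. a v = 0" unfolding P_def by auto
  qed
  hence "card P \<le> Vm.dim" using Vm.li_le_dim(2)[OF Vm.fin_dim _] PC by simp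
  hence "card P \<le> m" using Vm.dim_is_n by simp
  moreover have "card P = card B" unfolding P_def by (rule card_image[OF inj\<pi>])
  ultimately show ?thesis using dimB unfolding m_def by simp
qed



locale cug =
  fixes n :: nat and E :: "nat \<Rightarrow> nat \<Rightarrow> bool" and sg :: "nat \<Rightarrow> nat \<Rightarrow> real" and cs :: "nat list"
  assumes sgr: "signed_graph n E sg" and can: "canonical_with n E cs"
begin

abbreviation g where "g \<equiv> length cs"
definition c :: "nat \<Rightarrow> nat" where "c i = cs ! (i mod g)"

lemma E_sym: "E u v \<Longrightarrow> E v u"
  using sgr unfolding signed_graph_def simple_graph_def by blast
lemma E_lt: "E u v \<Longrightarrow> u < n \<and> v < n"
  using sgr unfolding signed_graph_def simple_graph_def by blast
lemma E_irr: "E u v \<Longrightarrow> u \<noteq> v"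
  using sgr unfolding signed_graph_def simple_graph_def by blast
lemma sg_pm: "E u v \<Longrightarrow> sg u v = 1 \<or> sg u v = -1"
  using sgr unfolding signed_graph_def by blast
lemma sg_sym: "E u v \<Longrightarrow> sg u v = sg v u"
  using sgr unfolding signed_graph_def by blast
lemma sg_sq: "E u v \<Longrightarrow> sg u v * sg u v = 1"
  using sg_pm by fastforce

lemma uni: "unicyclic_with n E cs" using can unfolding canonical_with_def by blast
lemma cyc: "is_cycle E cs" using uni unfolding unicyclic_with_def by blast
lemma g3: "g \<ge> 3" using cyc unfolding is_cycle_def by blast
lemma dist: "distinct cs" using cyc unfolding is_cycle_def by blast
lemma g_pos: "g > 0" using g3 by linarith

lemma c_mod: "c (i mod g) = c i" unfolding c_def by simp
lemma c_add: "c (i + g) = c i" unfolding c_def by simp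
lemma cs_c: "j < g \<Longrightarrow> cs ! j = c j" unfolding c_def by simp
lemma c_in: "c i \<in> set cs" unfolding c_def using g_pos by simp
lemma E_c: "E (c i) (c (Suc i))"
proof -
  have "E (cs ! (i mod g)) (cs ! ((i mod g + 1) mod g))" using cyc g_pos unfolding is_cycle_def by simp
  moreover have "(i mod g + 1) mod g = Suc i mod g" by (simp add: mod_Suc_eq)
  ultimately show ?thesis unfolding c_def by simp
qed
lemma c_lt: "c i < n" using E_c E_lt by blast
lemma set_cs_sub: "set cs \<subseteq> {..<n}"
proof
  fix v assume "v \<in> set cs"
  then obtain j where "j < g" "v = cs ! j" by (auto simp: in_set_conv_nth)
  thus "v \<in> {..<n}" using c_lt cs_c by auto
qed
lemma c_eq: "c i = c j \<longleftrightarrow> i mod g = j mod g"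
  unfolding c_def using dist g_pos by (simp add: nth_eq_iff_index_eq)
lemma in_cs: "v \<in> set cs \<Longrightarrow> \<exists>j<g. v = c j"
  by (auto simp: in_set_conv_nth cs_c)

lemma cycle_edges_eq: "is_cycle E ds \<Longrightarrow> cycle_edges ds = cycle_edges cs"
  using uni unfolding unicyclic_with_def by blast

lemma chordless_aux:
  assumes ab: "a < b" "b < g" and E: "E (cs ! a) (cs ! b)"
  shows "b = Suc a \<or> (a = 0 \<and> b = g - 1)"
proof (rule ccontr)
  assume nc: "\<not> (b = Suc a \<or> (a = 0 \<and> b = g - 1))"
  define ds where "ds = take (b - a + 1) (drop a cs)"
  have len: "length ds = b - a + 1" unfolding ds_def using ab by simp
  have dsn: "k < length ds \<Longrightarrow> ds ! k = cs ! (a + k)" for k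
    unfolding ds_def using ab by simp
  have "is_cycle E ds"
    unfolding is_cycle_def
  proof (intro conjI allI impI)
    show "3 \<le> length ds" using len nc ab by auto
    show "distinct ds" unfolding ds_def using dist by (simp add: distinct_take distinct_drop)
    fix k assume k: "k < length ds"
    show "E (ds ! k) (ds ! ((k + 1) mod length ds))"
    proof (cases "k + 1 < length ds")
      case True
      hence "ds ! ((k + 1) mod length ds) = cs ! (a + k + 1)" using dsn by simp
      moreover have "E (c (a + k)) (c (Suc (a + k)))" by (rule E_c)
      moreover have "a + k < g" "a + k + 1 < g" using True len ab by auto
      ultimately show ?thesis using dsn[OF k] cs_c by simp
    next
      case False
      hence "k = b - a" using k len by simp
      have k1: "k + 1 = length ds" using False k by simp
      have "ds ! ((k + 1) mod length ds) = ds ! 0" unfolding k1 by simp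
      also have "\<dots> = cs ! a" using dsn[of 0] len by simp
      finally have "ds ! ((k + 1) mod length ds) = cs ! a" .
      moreover note \<open>k = b - a\<close>
      ultimately show ?thesis using dsn[OF k] E_sym[OF E] ab by simp
    qed
  qed
  hence eq: "cycle_edges ds = cycle_edges cs" by (rule cycle_edges_eq)
  have "{cs ! b, cs ! a} \<in> cycle_edges ds"
    unfolding cycle_edges_def
  proof (intro CollectI exI conjI)
    show "b - a < length ds" using len by simp
    show "{cs ! b, cs ! a} = {ds ! (b - a), ds ! ((b - a + 1) mod length ds)}"
      using dsn[of "b - a"] dsn[of 0] len ab by simp
  qed
  hence "{cs ! b, cs ! a} \<in> cycle_edges cs" using eq by simp
  then obtain k where k: "k < g" and ek: "{cs ! b, cs ! a} = {cs ! k, cs ! ((k + 1) mod g)}"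
    unfolding cycle_edges_def by auto
  have k1: "(k + 1) mod g < g" using g_pos by simp
  have inj: "\<And>x y. x < g \<Longrightarrow> y < g \<Longrightarrow> cs ! x = cs ! y \<Longrightarrow> x = y"
    using dist by (simp add: nth_eq_iff_index_eq)
  from ek have "(cs ! b = cs ! k \<and> cs ! a = cs ! ((k + 1) mod g)) \<or> (cs ! b = cs ! ((k + 1) mod g) \<and> cs ! a = cs ! k)"
    by (auto simp: doubleton_eq_iff)
  hence "(b = k \<and> a = (k + 1) mod g) \<or> (b = (k + 1) mod g \<and> a = k)"
    using inj[OF ab(2) k] inj[OF ab(2) k1] inj[of a k] inj[of a "(k+1) mod g"] ab k k1 by auto
  thus False
  proof
    assume "b = k \<and> a = (k + 1) mod g"
    hence "a = (b + 1) mod g" by simp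
    moreover have "b + 1 = g \<or> b + 1 < g" using ab by auto
    ultimately show False using ab nc by auto
  next
    assume "b = (k + 1) mod g \<and> a = k"
    hence "b = (a + 1) mod g" by simp
    moreover have "a + 1 = g \<or> a + 1 < g" using ab by auto
    ultimately show False using ab nc by auto
  qed
qed

lemma chordless:
  assumes E: "E (c i) (c j)"
  shows "j mod g = Suc i mod g \<or> i mod g = Suc j mod g"
proof -
  define a where "a = i mod g"
  define b where "b = j mod g"
  have a: "a < g" and b: "b < g" unfolding a_def b_def using g_pos by auto
  have E': "E (cs ! a) (cs ! b)" using E unfolding c_def a_def b_def .
  have "a \<noteq> b" using E' E_irr by auto
  have sa: "Suc i mod g = (if Suc a = g then 0 else Suc a)" unfolding a_def using g_pos
    by (metis mod_Suc)
  have sb: "Suc j mod g = (if Suc b = g then 0 else Suc b)" unfolding b_def using g_pos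
    by (metis mod_Suc)
  show ?thesis
  proof (cases "a < b")
    case True
    from chordless_aux[OF True b E'] have "b = Suc a \<or> a = 0 \<and> b = g - 1" .
    thus ?thesis using sa sb b a_def b_def True by auto
  next
    case False
    hence "b < a" using \<open>a \<noteq> b\<close> by simp
    from chordless_aux[OF this a E_sym[OF E']] have "a = Suc b \<or> b = 0 \<and> a = g - 1" .
    thus ?thesis using sa sb a a_def b_def by auto
  qed
qed

end


context cug begin

definition Pd where "Pd = {v. v < n \<and> v \<notin> set cs}"
definition att where "att v = (THE w. w \<in> set cs \<and> E v w)"
definition PN where "PN u = {p \<in> Pd. E u p}"
definition Mx where "Mx = map_mat complex_of_real (adj_matrix n E sg)"
abbreviation s where "s u w \<equiv> complex_of_real (sg u w)"

lemma can_pend: "\<forall>v<n. v \<notin> set cs \<longrightarrow> (\<exists>!c. c \<in> set cs \<and> E v c)"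
  using can unfolding canonical_with_def by (elim conjE)
lemma can_np: "\<forall>u<n. \<forall>v<n. u \<notin> set cs \<longrightarrow> v \<notin> set cs \<longrightarrow> \<not> E u v"
  using can unfolding canonical_with_def by (elim conjE)
lemma pend_ex1: "v \<in> Pd \<Longrightarrow> \<exists>!w. w \<in> set cs \<and> E v w"
  by (rule can_pend[rule_format]) (auto simp: Pd_def)
lemma pend_nc: assumes v: "v \<in> Pd" and E: "E v u" shows "u \<in> set cs"
proof (rule ccontr)
  assume "u \<notin> set cs"
  moreover have "v < n" "v \<notin> set cs" using v unfolding Pd_def by auto
  moreover have "u < n" using E_lt[OF E] by simp
  ultimately have "\<not> E v u" using can_np by blast
  with E show False by simp
qed
lemma att: "v \<in> Pd \<Longrightarrow> att v \<in> set cs \<and> E v (att v)"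
  unfolding att_def by (rule theI', rule pend_ex1)
lemma pend_nbr: assumes v: "v \<in> Pd" shows "E v w \<longleftrightarrow> w = att v"
proof
  assume E: "E v w"
  have w: "w \<in> set cs \<and> E v w" using pend_nc[OF v E] E by simp
  show "w = att v" using pend_ex1[OF v] w att[OF v] by (elim ex1E) blast
next
  assume "w = att v" thus "E v w" using att[OF v] by simp
qed
lemma PN_iff: "p \<in> PN u \<longleftrightarrow> p \<in> Pd \<and> att p = u"
proof
  assume "p \<in> PN u"
  hence p: "p \<in> Pd" "E u p" unfolding PN_def by auto
  hence "E p u" using E_sym by simp
  thus "p \<in> Pd \<and> att p = u" using pend_nbr[OF p(1)] p(1) by simp
next
  assume p: "p \<in> Pd \<and> att p = u"
  hence "E p u" using att by blast
  thus "p \<in> PN u" using p E_sym unfolding PN_def by simp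
qed
lemma Pd_fin: "finite Pd" unfolding Pd_def by auto
lemma PN_fin: "finite (PN u)" unfolding PN_def using Pd_fin by auto
lemma c_notin_Pd: "c i \<notin> Pd" unfolding Pd_def using c_in by auto

lemma s_sq: "E u v \<Longrightarrow> s u v * s u v = 1"
proof -
  assume E: "E u v"
  have "s u v * s u v = complex_of_real (sg u v * sg u v)" by simp
  also have "\<dots> = 1" using sg_sq[OF E] by simp
  finally show ?thesis .
qed
lemma s_sym: "E u v \<Longrightarrow> s u v = s v u"
  using sg_sym by simp
lemma s_nz: "E u v \<Longrightarrow> s u v \<noteq> 0"
  using s_sq by force

lemma Mx_carrier: "Mx \<in> carrier_mat n n" unfolding Mx_def adj_matrix_def by simp
lemma Mx_entry: "i < n \<Longrightarrow> j < n \<Longrightarrow> Mx $$ (i,j) = (if E i j then s i j else 0)"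
  unfolding Mx_def adj_matrix_def by simp

lemma nbr_fin: "finite {w. E u w}"
  by (rule finite_subset[of _ "{..<n}"]) (auto dest: E_lt)

lemma row: assumes x: "x \<in> carrier_vec n" and u: "u < n"
  shows "(Mx *\<^sub>v x) $ u = (\<Sum>w\<in>{w. E u w}. s u w * x $ w)"
proof -
  have "(Mx *\<^sub>v x) $ u = row Mx u \<bullet> x" using u Mx_carrier by simp
  also have "\<dots> = (\<Sum>j\<in>{0..<n}. Mx $$ (u,j) * x $ j)"
    unfolding scalar_prod_def using x u Mx_carrier by simp
  also have "\<dots> = (\<Sum>j\<in>{0..<n}. if E u j then s u j * x $ j else 0)"
    using u by (intro sum.cong refl) (simp add: Mx_entry)
  also have "\<dots> = (\<Sum>j\<in>{j \<in> {0..<n}. E u j}. s u j * x $ j)"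
    by (rule sum.inter_filter[symmetric]) simp
  also have "{j \<in> {0..<n}. E u j} = {w. E u w}" using E_lt by auto
  finally show ?thesis .
qed

lemma pend_row: assumes v: "v \<in> Pd" and x: "x \<in> carrier_vec n"
  shows "(Mx *\<^sub>v x) $ v = s v (att v) * x $ (att v)"
proof -
  have "{w. E v w} = {att v}" using pend_nbr[OF v] by auto
  moreover have "v < n" using v unfolding Pd_def by simp
  ultimately show ?thesis using row[OF x] by simp
qed

lemma mod_suc_cancel: "Suc i mod g = Suc j mod g \<Longrightarrow> i mod g = j mod g"
  using mod_Suc[of i g] mod_Suc[of j g] by (auto split: if_splits)

lemma c_ne2: "c i \<noteq> c (i + 2)"
proof
  assume "c i = c (i + 2)"
  hence "(i + 2) mod g = i mod g" using c_eq by simp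
  hence "g dvd (i + 2 - i)" using mod_eq_dvd_iff_nat[of i "i+2" g] by simp
  hence "g dvd 2" by simp
  hence "g \<le> 2" by (simp add: dvd_imp_le)
  thus False using g3 by simp
qed

lemma nbr_c: "{w. E (c (Suc i)) w} = {c i, c (i + 2)} \<union> PN (c (Suc i))"
proof
  show "{w. E (c (Suc i)) w} \<subseteq> {c i, c (i + 2)} \<union> PN (c (Suc i))"
  proof
    fix w assume "w \<in> {w. E (c (Suc i)) w}"
    hence Ew: "E (c (Suc i)) w" by simp
    show "w \<in> {c i, c (i + 2)} \<union> PN (c (Suc i))"
    proof (cases "w \<in> set cs")
      case True
      then obtain j where j: "w = c j" using in_cs by auto
      from chordless[of "Suc i" j] Ew j
      have "j mod g = Suc (Suc i) mod g \<or> Suc i mod g = Suc j mod g" by (simp only:)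
      moreover have "Suc (Suc i) = i + 2" by simp
      ultimately have "j mod g = (i + 2) mod g \<or> i mod g = j mod g" using mod_suc_cancel[of i j] by metis
      hence "w = c (i + 2) \<or> w = c i" using j c_eq by auto
      thus ?thesis by auto
    next
      case False
      hence "w \<in> Pd" using E_lt[OF Ew] unfolding Pd_def by simp
      thus ?thesis using Ew unfolding PN_def by auto
    qed
  qed
  show "{c i, c (i + 2)} \<union> PN (c (Suc i)) \<subseteq> {w. E (c (Suc i)) w}"
    using E_sym[OF E_c[of i]] E_c[of "Suc i"] unfolding PN_def by (auto simp: numeral_2_eq_2)
qed

lemma cyc_row: assumes x: "x \<in> carrier_vec n"
  shows "(Mx *\<^sub>v x) $ (c (Suc i)) = s (c (Suc i)) (c i) * x $ (c i) + s (c (Suc i)) (c (i + 2)) * x $ (c (i + 2))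
     + (\<Sum>p\<in>PN (c (Suc i)). s (c (Suc i)) p * x $ p)"
proof -
  let ?f = "\<lambda>w. s (c (Suc i)) w * x $ w"
  have "(Mx *\<^sub>v x) $ (c (Suc i)) = sum ?f ({c i, c (i + 2)} \<union> PN (c (Suc i)))"
    unfolding row[OF x c_lt] nbr_c ..
  also have "\<dots> = sum ?f {c i, c (i + 2)} + sum ?f (PN (c (Suc i)))"
    by (rule sum.union_disjoint) (auto simp: PN_fin[unfolded PN_def] PN_def c_notin_Pd)
  also have "sum ?f {c i, c (i + 2)} = ?f (c i) + ?f (c (i + 2))"
    using c_ne2[of i] by simp
  finally show ?thesis .
qed

lemma vertex_cases: "u < n \<Longrightarrow> u \<in> Pd \<or> (\<exists>i. u = c (Suc i))"
proof -
  assume u: "u < n"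
  show ?thesis
  proof (cases "u \<in> set cs")
    case True
    then obtain j where "u = c j" using in_cs by auto
    moreover have "c j = c (Suc (j + g - 1))" using c_add[of j] g_pos by (simp add: Suc_diff_le)
    ultimately show ?thesis by blast
  qed (auto simp: Pd_def u)
qed

lemma kernelI: "x \<in> carrier_vec n \<Longrightarrow> (\<And>u. u < n \<Longrightarrow> (Mx *\<^sub>v x) $ u = 0) \<Longrightarrow> x \<in> mat_kernel Mx"
  by (rule mat_kernelI[OF Mx_carrier]) (auto intro!: eq_vecI simp: Mx_def adj_matrix_def)
lemma kernelD: "x \<in> mat_kernel Mx \<Longrightarrow> u < n \<Longrightarrow> (Mx *\<^sub>v x) $ u = 0"
  using mat_kernelD[OF Mx_carrier] by (metis index_zero_vec(1))
lemma kernel_carrier: "x \<in> mat_kernel Mx \<Longrightarrow> x \<in> carrier_vec n"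
  using mat_kernelD[OF Mx_carrier] by blast

lemma card_Pd: "card Pd = n - g"
proof -
  have "Pd = {..<n} - set cs" unfolding Pd_def by auto
  hence "card Pd = n - card (set cs)" using set_cs_sub by (simp add: card_Diff_subset)
  thus ?thesis using distinct_card[OF dist] by simp
qed

lemma Mx_sym: "i < n \<Longrightarrow> j < n \<Longrightarrow> adj_matrix n E sg $$ (i,j) = adj_matrix n E sg $$ (j,i)"
  unfolding adj_matrix_def using E_sym sg_sym by auto

lemma nullity_kernel: "nullity n E sg = kernel_dim Mx"
  unfolding nullity_def Mx_def
  by (rule order0_kernel_dim[of _ n]) (auto simp: Mx_sym, simp add: adj_matrix_def)

end


lemma prod_add_nat: "(\<Prod>k<(m::nat) + p. h k) = (\<Prod>k<m. h k) * (\<Prod>k<p. h (m + k))"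
  by (induct p) (auto simp: mult.assoc)

context cug begin

definition f where "f i = s (c i) (c (Suc i))"
definition bal where "bal = (\<Prod>i<g. f i)"
definition rec where "rec x i \<longleftrightarrow> (Mx *\<^sub>v x) $ (c (Suc i)) = 0 \<and> (\<Sum>p\<in>PN (c (Suc i)). s (c (Suc i)) p * x $ p) = 0"

lemma f_sq: "f i * f i = 1" unfolding f_def using s_sq[OF E_c] .
lemma f_nz: "f i \<noteq> 0"
proof
  assume "f i = 0" thus False using f_sq[of i] by simp
qed
lemma f_add: "f (i + g) = f i" unfolding f_def using c_add[of i] c_add[of "Suc i"] by simp
lemma f_left: "s (c (Suc i)) (c i) = f i" unfolding f_def using s_sym[OF E_c] by simp
lemma f_right: "s (c (Suc i)) (c (i + 2)) = f (Suc i)" unfolding f_def by (simp add: numeral_2_eq_2)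

lemma rec_step:
  assumes x: "x \<in> carrier_vec n" and r: "rec x i"
  shows "x $ c (i + 2) = - f i * f (Suc i) * x $ c i"
proof -
  have r1: "(Mx *\<^sub>v x) $ c (Suc i) = 0" and r2: "(\<Sum>p\<in>PN (c (Suc i)). s (c (Suc i)) p * x $ p) = 0"
    using r unfolding rec_def by auto
  have "(Mx *\<^sub>v x) $ c (Suc i) = f i * x $ c i + f (Suc i) * x $ c (i + 2)"
    using cyc_row[OF x, of i] r2 unfolding f_left f_right by simp
  with r1 have "f i * x $ c i + f (Suc i) * x $ c (i + 2) = 0" by simp
  hence "f (Suc i) * (f i * x $ c i + f (Suc i) * x $ c (i + 2)) = 0" by simp
  hence "f (Suc i) * f i * x $ c i + (f (Suc i) * f (Suc i)) * x $ c (i + 2) = 0"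
    by (simp add: algebra_simps)
  hence "f (Suc i) * f i * x $ c i + x $ c (i + 2) = 0" unfolding f_sq by simp
  thus ?thesis by (simp add: algebra_simps eq_neg_iff_add_eq_0)
qed

lemma prop_prod:
  assumes x: "x \<in> carrier_vec n" and r: "\<And>j. j < t \<Longrightarrow> rec x (a + 2 * j)"
  shows "x $ c (a + 2 * t) = (-1) ^ t * (\<Prod>k<2 * t. f (a + k)) * x $ c a"
  using r
proof (induct t)
  case (Suc t)
  have IH: "x $ c (a + 2 * t) = (-1) ^ t * (\<Prod>k<2 * t. f (a + k)) * x $ c a" using Suc by simp
  have "x $ c (a + 2 * t + 2) = - f (a + 2 * t) * f (Suc (a + 2 * t)) * x $ c (a + 2 * t)"
    by (rule rec_step[OF x Suc.prems]) simp
  moreover have "(\<Prod>k<2 * Suc t. f (a + k)) = (\<Prod>k<2 * t. f (a + k)) * f (a + 2 * t) * f (Suc (a + 2 * t))"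
    by (simp add: mult.assoc)
  moreover have "a + 2 * Suc t = a + 2 * t + 2" by simp
  ultimately show ?case using IH by (simp add: algebra_simps)
qed simp

lemma prod_f_nz: "(\<Prod>k<m. f (a + k)) \<noteq> 0"
  using f_nz by (simp add: prod_zero_iff)

lemma prop_zero:
  assumes x: "x \<in> carrier_vec n" and r: "\<And>j. j < t \<Longrightarrow> rec x (a + 2 * j)"
  shows "x $ c (a + 2 * t) = 0 \<longleftrightarrow> x $ c a = 0"
proof -
  define K where "K = (-1) ^ t * (\<Prod>k<2 * t. f (a + k))"
  have p: "x $ c (a + 2 * t) = K * x $ c a" unfolding K_def by (rule prop_prod[OF x r])
  have nz: "K \<noteq> 0" unfolding K_def using prod_f_nz[of a "2 * t"] by (simp del: prod_zero_iff)
  show ?thesis unfolding p using nz by simp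
qed

lemma bal_shift: "(\<Prod>k<g. f (a + k)) = bal"
proof (induct a)
  case 0 thus ?case unfolding bal_def by simp
next
  case (Suc a)
  obtain m where gm: "g = Suc m" using g_pos by (cases g) auto
  have "(\<Prod>k<g. f (a + k)) = f a * (\<Prod>k<m. f (a + Suc k))"
    unfolding gm prod.lessThan_Suc_shift by simp
  moreover have "(\<Prod>k<g. f (Suc a + k)) = (\<Prod>k<m. f (Suc a + k)) * f (Suc a + m)"
    unfolding gm by simp
  moreover have "f (Suc a + m) = f a" using f_add[of a] gm by simp
  ultimately show ?case using Suc by (simp add: mult.commute)
qed

lemma bal_sq: "bal * bal = 1"
proof -
  have "bal * bal = (\<Prod>i<g. f i * f i)" unfolding bal_def by (simp add: prod.distrib)
  also have "\<dots> = 1" using f_sq by simp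
  finally show ?thesis .
qed

lemma prod_2g: "(\<Prod>k<2 * g. f (a + k)) = 1"
proof -
  have "(\<Prod>k<2 * g. f (a + k)) = (\<Prod>k<g + g. f (a + k))" by (simp add: mult_2)
  also have "\<dots> = (\<Prod>k<g. f (a + k)) * (\<Prod>k<g. f (a + (g + k)))" by (rule prod_add_nat)
  also have "\<dots> = bal * bal" using bal_shift[of a] bal_shift[of "a + g"] by (simp add: add.assoc)
  finally show ?thesis using bal_sq by simp
qed

lemma bal_real: "bal = complex_of_real (\<Prod>i<g. sg (cs ! i) (cs ! ((i + 1) mod g)))"
proof -
  have "bal = (\<Prod>i<g. complex_of_real (sg (cs ! i) (cs ! ((i + 1) mod g))))"
    unfolding bal_def f_def c_def by (intro prod.cong refl) simp
  thus ?thesis by simp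
qed

lemma bal_pm: "bal = 1 \<or> bal = -1"
proof -
  have "(bal - 1) * (bal + 1) = 0" using bal_sq by (simp add: algebra_simps)
  thus ?thesis by (auto simp: eq_neg_iff_add_eq_0)
qed

lemma balanced_iff: "balanced_cycle sg cs \<longleftrightarrow> bal = 1"
  unfolding balanced_cycle_def bal_real of_real_eq_1_iff ..

end


context cug begin

lemma c_2g: "c (a + 2 * g) = c a" using c_add[of a] c_add[of "a + g"] by (simp add: mult_2 add.assoc)

lemma cyc_only_Pd: "set cs = {0..<n} \<Longrightarrow> Pd = {}" unfolding Pd_def by auto
lemma cyc_only_PN: "set cs = {0..<n} \<Longrightarrow> PN u = {}" unfolding PN_def using cyc_only_Pd by auto
lemma cyc_only_n: "set cs = {0..<n} \<Longrightarrow> n = g"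
  using distinct_card[OF dist] by simp

lemma cyc_only_rec: assumes "set cs = {0..<n}" "x \<in> mat_kernel Mx" shows "rec x i"
  unfolding rec_def using kernelD[OF assms(2) c_lt] cyc_only_PN[OF assms(1)] by simp

lemma cplx_self_neg: "(z::complex) = - z \<Longrightarrow> z = 0" by simp

lemma part1_trivial:
  assumes cy: "set cs = {0..<n}" and cond: "odd g \<or> (-1) ^ (g div 2) * bal = -1"
    and x: "x \<in> mat_kernel Mx"
  shows "x = 0\<^sub>v n"
proof -
  have xc: "x \<in> carrier_vec n" using kernel_carrier[OF x] .
  have r: "\<And>i. rec x i" using cyc_only_rec[OF cy x] .
  have y0: "x $ c a = 0" for a
  proof (cases "odd g")
    case True
    have "x $ c (a + 2 * g) = (-1) ^ g * (\<Prod>k<2 * g. f (a + k)) * x $ c a"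
      by (rule prop_prod[OF xc r])
    hence "x $ c a = - x $ c a" using True prod_2g[of a] c_2g[of a] by simp
    thus ?thesis by (rule cplx_self_neg)
  next
    case False
    hence ev: "even g" by simp
    hence g2: "2 * (g div 2) = g" by simp
    have "x $ c (a + 2 * (g div 2)) = (-1) ^ (g div 2) * (\<Prod>k<2 * (g div 2). f (a + k)) * x $ c a"
      by (rule prop_prod[OF xc r])
    hence "x $ c (a + g) = (-1) ^ (g div 2) * bal * x $ c a" unfolding g2 bal_shift .
    hence "x $ c a = - x $ c a" using cond False c_add[of a] by simp
    thus ?thesis by (rule cplx_self_neg)
  qed
  show ?thesis
  proof (rule eq_vecI)
    show "dim_vec x = dim_vec (0\<^sub>v n)" using xc by simp
    fix u assume "u < dim_vec (0\<^sub>v n)"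
    hence "u \<in> set cs" using cy by simp
    then obtain j where "u = c j" using in_cs by auto
    thus "x $ u = 0\<^sub>v n $ u" using y0 \<open>u < dim_vec (0\<^sub>v n)\<close> by simp
  qed
qed

definition F where "F j = (if even j then (-1) ^ (j div 2) * (\<Prod>k<j. f k) else 0)"

lemma F_period:
  assumes ev: "even g" and b: "(-1) ^ (g div 2) * bal = 1"
  shows "F (j + g) = F j"
proof (cases "even j")
  case True
  have d: "(j + g) div 2 = j div 2 + g div 2" using True ev by auto
  have p: "(\<Prod>k<j + g. f k) = (\<Prod>k<j. f k) * bal" unfolding prod_add_nat bal_shift ..
  have "F (j + g) = (-1) ^ (j div 2) * (\<Prod>k<j. f k) * ((-1) ^ (g div 2) * bal)"
    unfolding F_def using True ev by (simp add: d p power_add algebra_simps)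
  thus ?thesis unfolding b F_def using True by simp
next
  case False
  thus ?thesis unfolding F_def using ev by simp
qed

lemma F_mod:
  assumes ev: "even g" and b: "(-1) ^ (g div 2) * bal = 1"
  shows "F (j mod g) = F j"
proof -
  have "F (r + g * q) = F r" for r q
  proof (induct q)
    case (Suc q)
    have "r + g * Suc q = (r + g * q) + g" by simp
    hence "F (r + g * Suc q) = F ((r + g * q) + g)" by (simp only:)
    also have "\<dots> = F (r + g * q)" by (rule F_period[OF ev b])
    finally show ?case using Suc by simp
  qed simp
  from this[of "j mod g" "j div g"] show ?thesis by simp
qed

lemma F_rec: "f i * F i + f (Suc i) * F (i + 2) = 0"
proof (cases "even i")
  case True
  define P where "P = (-1) ^ (i div 2) * (\<Prod>k<i. f k)"
  have Fi: "F i = P" unfolding F_def P_def using True by simp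
  have d: "(i + 2) div 2 = Suc (i div 2)" using True by auto
  have e2: "even (i + 2)" using True by simp
  have pr: "(\<Prod>k<i + 2. f k) = (\<Prod>k<i. f k) * f i * f (Suc i)" by (simp add: numeral_2_eq_2)
  have "F (i + 2) = (-1) ^ ((i + 2) div 2) * (\<Prod>k<i + 2. f k)" unfolding F_def using e2 by simp
  also have "\<dots> = (-1) ^ Suc (i div 2) * ((\<Prod>k<i. f k) * f i * f (Suc i))" unfolding d pr ..
  also have "\<dots> = - P * f i * f (Suc i)" unfolding P_def by (simp add: algebra_simps)
  finally have Fi2: "F (i + 2) = - P * f i * f (Suc i)" .
  have "f i * F i + f (Suc i) * F (i + 2) = f i * P - P * f i * (f (Suc i) * f (Suc i))"
    unfolding Fi Fi2 by (simp add: algebra_simps)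
  also have "\<dots> = 0" unfolding f_sq by simp
  finally show ?thesis .
next
  case False
  thus ?thesis unfolding F_def by simp
qed

lemma part1_vec:
  assumes cy: "set cs = {0..<n}" and ev: "even g" and b: "(-1) ^ (g div 2) * bal = 1"
  shows "\<exists>x \<in> mat_kernel Mx. x $ c 0 \<noteq> 0"
proof -
  define x where "x = vec n (\<lambda>v. if v \<in> set cs then F (THE j. j < g \<and> cs ! j = v) else 0)"
  have xc: "x \<in> carrier_vec n" unfolding x_def by simp
  have xcj: "x $ c j = F j" for j
  proof -
    have "(THE k. k < g \<and> cs ! k = c j) = j mod g"
    proof (rule the_equality)
      show "j mod g < g \<and> cs ! (j mod g) = c j" unfolding c_def using g_pos by simp
      fix k assume "k < g \<and> cs ! k = c j"
      moreover have "j mod g < g" using g_pos by simp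
      ultimately show "k = j mod g" unfolding c_def using dist nth_eq_iff_index_eq by blast
    qed
    thus ?thesis unfolding x_def using c_lt[of j] c_in[of j] F_mod[OF ev b] by simp
  qed
  have "x \<in> mat_kernel Mx"
  proof (rule kernelI[OF xc])
    fix u assume u: "u < n"
    from vertex_cases[OF u] cyc_only_Pd[OF cy] obtain i where ui: "u = c (Suc i)" by auto
    show "(Mx *\<^sub>v x) $ u = 0"
      unfolding ui cyc_row[OF xc] cyc_only_PN[OF cy] f_left f_right xcj using F_rec[of i] by simp
  qed
  moreover have "x $ c 0 \<noteq> 0" unfolding xcj F_def by simp
  ultimately show ?thesis by blast
qed

lemma part1:
  assumes cy: "set cs = {0..<n}"
  shows "nullity n E sg = n - g \<longleftrightarrow> odd g \<or> (balanced_cycle sg cs \<and> g mod 4 = 2)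
                    \<or> (\<not> balanced_cycle sg cs \<and> g mod 4 = 0)"
proof -
  have ng: "n - g = 0" using cyc_only_n[OF cy] by simp
  have cond: "(odd g \<or> (balanced_cycle sg cs \<and> g mod 4 = 2) \<or> (\<not> balanced_cycle sg cs \<and> g mod 4 = 0))
     \<longleftrightarrow> (odd g \<or> (-1) ^ (g div 2) * bal = -1)"
  proof -
    have m4: "g mod 4 = 2 \<longleftrightarrow> even g \<and> odd (g div 2)" "g mod 4 = 0 \<longleftrightarrow> even g \<and> even (g div 2)"
      by presburger+
    show ?thesis unfolding balanced_iff m4 using bal_pm by (cases "even (g div 2)") auto
  qed
  show ?thesis unfolding ng nullity_kernel cond
  proof
    assume k0: "kernel_dim Mx = 0"
    show "odd g \<or> (-1) ^ (g div 2) * bal = -1"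
    proof (rule ccontr)
      assume "\<not> (odd g \<or> (-1) ^ (g div 2) * bal = -1)"
      hence ev: "even g" and b: "(-1) ^ (g div 2) * bal = 1" using bal_pm by (auto simp: minus_one_power_iff)
      from part1_vec[OF cy ev b] obtain x where x: "x \<in> mat_kernel Mx" "x $ c 0 \<noteq> 0" by auto
      have "card {c 0} \<le> kernel_dim Mx"
        by (rule kernel_dim_lower[OF Mx_carrier, of _ "\<lambda>_. x"]) (use x c_lt in auto)
      with k0 show False by simp
    qed
  next
    assume cnd: "odd g \<or> (-1) ^ (g div 2) * bal = -1"
    have "kernel_dim Mx \<le> card ({} :: nat set)"
      by (rule kernel_dim_upper[OF Mx_carrier]) (use part1_trivial[OF cy cnd] in auto)
    thus "kernel_dim Mx = 0" by simp
  qed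
qed

end


lemma odd_mod_even: "even (g::nat) \<Longrightarrow> odd ((X::int) mod int g) \<longleftrightarrow> odd X"
proof -
  assume "even g"
  hence "(2::int) dvd int g" by simp
  hence "X mod int g mod 2 = X mod 2" by (rule mod_mod_cancel)
  thus ?thesis by (simp add: even_iff_mod_2_eq_zero)
qed

lemma odd_diff1: "odd (int A - int B - 1) \<longleftrightarrow> (even A \<longleftrightarrow> even B)"
  by presburger

context cug begin

definition MP where "MP = {i. i < g \<and> major_vertex n E cs (cs ! i)}"
definition ms where "ms = sorted_list_of_set MP"

lemma MP_iff: "i \<in> MP \<longleftrightarrow> i < g \<and> PN (c i) \<noteq> {}"
proof -
  have "i < g \<Longrightarrow> major_vertex n E cs (cs ! i) \<longleftrightarrow> PN (c i) \<noteq> {}"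
    unfolding major_vertex_def PN_def Pd_def using cs_c[of i] c_in[of i] by auto
  thus ?thesis unfolding MP_def by auto
qed

lemma MP_sub: "MP \<subseteq> {..<g}" unfolding MP_def by auto
lemma MP_fin: "finite MP" using MP_sub finite_subset by blast
lemma major_c: "PN (c i) \<noteq> {} \<longleftrightarrow> i mod g \<in> MP"
  using MP_iff[of "i mod g"] c_mod[of i] g_pos by simp

lemma mp_eq: "major_positions n E cs = ms"
  unfolding major_positions_def ms_def MP_def ..

lemma ms_set: "set ms = MP" unfolding ms_def using MP_fin by simp
lemma ms_len: "length ms = card MP" unfolding ms_def using MP_fin by simp

lemma Pd_ne: "set cs \<noteq> {0..<n} \<Longrightarrow> Pd \<noteq> {}"
  unfolding Pd_def using set_cs_sub by auto

lemma MP_ne: assumes "set cs \<noteq> {0..<n}" shows "MP \<noteq> {}"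
proof -
  obtain p where p: "p \<in> Pd" using Pd_ne[OF assms] by auto
  from att[OF p] obtain j where j: "j < g" "att p = c j" using in_cs by auto
  have "p \<in> PN (c j)" using PN_iff p j by simp
  hence "j \<in> MP" using MP_iff j by auto
  thus ?thesis by auto
qed

lemma cond_iff:
  assumes ne: "MP \<noteq> {}" and ev: "even g"
  shows "(\<forall>i < length (major_positions n E cs). odd (gap n E cs i)) \<longleftrightarrow> (\<forall>a\<in>MP. even a = even (ms ! 0))"
proof -
  define k where "k = length ms"
  have k0: "k > 0" unfolding k_def ms_len using ne MP_fin by (simp add: card_gt_0_iff)
  have gap: "gap n E cs i = (int (ms ! ((i + 1) mod k)) - int (ms ! i) - 1) mod int g" for i
    unfolding gap_def mp_eq Let_def k_def ..
  have step: "odd (gap n E cs i) \<longleftrightarrow> (even (ms ! ((i + 1) mod k)) \<longleftrightarrow> even (ms ! i))" for i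
    unfolding gap odd_mod_even[OF ev] odd_diff1 ..
  have allms: "(\<forall>a\<in>MP. P a) \<longleftrightarrow> (\<forall>i<k. P (ms ! i))" for P
    unfolding k_def ms_set[symmetric] by (metis in_set_conv_nth)
  show ?thesis unfolding mp_eq step k_def[symmetric] allms
  proof
    assume H: "\<forall>i<k. even (ms ! ((i + 1) mod k)) = even (ms ! i)"
    show "\<forall>i<k. even (ms ! i) = even (ms ! 0)"
    proof (intro allI impI)
      fix i assume "i < k"
      thus "even (ms ! i) = even (ms ! 0)"
      proof (induct i)
        case (Suc i)
        hence "(Suc i) mod k = Suc i" "i < k" by auto
        with H Suc show ?case by (metis Suc_eq_plus1)
      qed simp
    qed
  next
    assume H: "\<forall>i<k. even (ms ! i) = even (ms ! 0)"
    show "\<forall>i<k. even (ms ! ((i + 1) mod k)) = even (ms ! i)"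
    proof (intro allI impI)
      fix i assume "i < k"
      have "(i + 1) mod k < k" using k0 by simp
      thus "even (ms ! ((i + 1) mod k)) = even (ms ! i)" using H \<open>i < k\<close> by metis
    qed
  qed
qed

lemma b0_MP: "MP \<noteq> {} \<Longrightarrow> ms ! 0 \<in> MP"
  using ms_set ms_len MP_fin by (metis card_gt_0_iff nth_mem)

end


context cug begin

lemma mod_off_ne: assumes "b < g" "0 < e" "e < g" shows "(b + e) mod g \<noteq> b"
proof
  assume "(b + e) mod g = b"
  hence "(b + e) mod g = b mod g" using assms by simp
  hence "g dvd (b + e - b)" using mod_eq_dvd_iff_nat[of b "b + e" g] by simp
  hence "g dvd e" by simp
  thus False using assms by (simp add: dvd_imp_le leD)
qed

lemma maj0: assumes x: "x \<in> mat_kernel Mx" and ne: "PN (c i) \<noteq> {}" shows "x $ c i = 0"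
proof -
  obtain p where p: "p \<in> PN (c i)" using ne by auto
  hence pP: "p \<in> Pd" and ap: "att p = c i" using PN_iff by auto
  have pn: "p < n" using pP unfolding Pd_def by simp
  have "s p (att p) * x $ (att p) = 0" using kernelD[OF x pn] pend_row[OF pP kernel_carrier[OF x]] by simp
  moreover have "s p (att p) \<noteq> 0" using s_nz att[OF pP] by blast
  ultimately show ?thesis using ap by simp
qed

lemma ub_core:
  assumes b0: "b0 \<in> MP" and p0: "p0 \<in> PN (c b0)"
    and x: "x \<in> mat_kernel Mx" and van: "\<And>q. q \<in> Pd - {p0} \<Longrightarrow> x $ q = 0"
    and H: "x $ c (Suc b0) = 0 \<or> odd g \<or> (\<exists>a1\<in>MP. even a1 \<noteq> even b0)"
  shows "x = 0\<^sub>v n"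
proof -
  have xc: "x \<in> carrier_vec n" using kernel_carrier[OF x] .
  have b0g: "b0 < g" using b0 MP_iff by simp
  have p0P: "p0 \<in> Pd" and ap0: "att p0 = c b0" using p0 PN_iff by auto
  have recH: "rec x i" if ne: "Suc i mod g \<noteq> b0" for i
    unfolding rec_def
  proof
    show "(Mx *\<^sub>v x) $ c (Suc i) = 0" using kernelD[OF x c_lt] .
    show "(\<Sum>p\<in>PN (c (Suc i)). s (c (Suc i)) p * x $ p) = 0"
    proof (rule sum.neutral, intro ballI)
      fix q assume q: "q \<in> PN (c (Suc i))"
      hence qP: "q \<in> Pd" and aq: "att q = c (Suc i)" using PN_iff by auto
      have "q \<noteq> p0"
      proof
        assume "q = p0"
        hence "c (Suc i) = c b0" using aq ap0 by simp
        hence "Suc i mod g = b0" using c_eq b0g by simp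
        with ne show False by simp
      qed
      thus "s (c (Suc i)) q * x $ q = 0" using van qP by simp
    qed
  qed
  have seg: "x $ c (b0 + a + 2 * t) = 0 \<longleftrightarrow> x $ c (b0 + a) = 0" if at: "a + 2 * t \<le> g" for a t
  proof (rule prop_zero[OF xc])
    fix j assume j: "j < t"
    have "Suc (b0 + a + 2 * j) mod g \<noteq> b0"
      using mod_off_ne[OF b0g, of "a + 2 * j + 1"] j at by (simp add: add.assoc)
    thus "rec x (b0 + a + 2 * j)" by (rule recH)
  qed
  have y0: "x $ c b0 = 0" using maj0[OF x] p0 by auto
  have yd: "x $ c (b0 + d) = 0" if d: "d < g" for d
  proof (cases "even d")
    case True
    have "x $ c (b0 + 0 + 2 * (d div 2)) = 0 \<longleftrightarrow> x $ c (b0 + 0) = 0" by (rule seg) (use d True in auto)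
    thus ?thesis using True y0 by simp
  next
    case odd: False
    consider (C) "x $ c (Suc b0) = 0" | (A) "odd g" | (B) "even g" "\<exists>a1\<in>MP. even a1 \<noteq> even b0"
      using H by blast
    thus ?thesis
    proof cases
      case C
      have s1: "x $ c (b0 + 1 + 2 * (d div 2)) = 0 \<longleftrightarrow> x $ c (b0 + 1) = 0" by (rule seg) (use d odd in presburger)
      have e: "b0 + 1 + 2 * (d div 2) = b0 + d" using odd by presburger
      have "x $ c (b0 + 1) = 0" using C by simp
      thus ?thesis using s1 unfolding e by simp
    next
      case A
      have "x $ c (b0 + d + 2 * ((g - d) div 2)) = 0 \<longleftrightarrow> x $ c (b0 + d) = 0" by (rule seg) (use d in presburger)
      moreover have "b0 + d + 2 * ((g - d) div 2) = b0 + g" using odd A d by presburger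
      ultimately show ?thesis using y0 c_add[of b0] by simp
    next
      case B
      then obtain a1 where a1: "a1 \<in> MP" "even a1 \<noteq> even b0" by auto
      have a1g: "a1 < g" using a1 MP_iff by simp
      define d1 where "d1 = (a1 + g - b0) mod g"
      have d1g: "d1 < g" unfolding d1_def using g_pos by simp
      have "(b0 + d1) mod g = (b0 + (a1 + g - b0)) mod g" unfolding d1_def by (simp add: mod_add_right_eq)
      also have "b0 + (a1 + g - b0) = a1 + g" using b0g by simp
      finally have "c (b0 + d1) = c a1" using c_eq by simp
      hence yd1: "x $ c (b0 + d1) = 0" using maj0[OF x] a1 MP_iff by auto
      have "odd (a1 + g - b0)" using a1(2) B(1) b0g by presburger
      hence o1: "(a1 + g - b0) mod 2 = 1" by (simp only: odd_iff_mod_2_eq_one)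
      have "d1 mod 2 = (a1 + g - b0) mod 2" unfolding d1_def
        by (rule mod_mod_cancel) (use B(1) in simp)
      hence "d1 mod 2 = 1" using o1 by simp
      hence od1: "odd d1" by (simp only: odd_iff_mod_2_eq_one)
      show ?thesis
      proof (cases "d \<le> d1")
        case True
        have "x $ c (b0 + d + 2 * ((d1 - d) div 2)) = 0 \<longleftrightarrow> x $ c (b0 + d) = 0"
          by (rule seg) (use d1g True in presburger)
        moreover have "b0 + d + 2 * ((d1 - d) div 2) = b0 + d1" using True odd od1 by presburger
        ultimately show ?thesis using yd1 by simp
      next
        case False
        have "x $ c (b0 + d1 + 2 * ((d - d1) div 2)) = 0 \<longleftrightarrow> x $ c (b0 + d1) = 0"
          by (rule seg) (use d False in presburger)
        moreover have "b0 + d1 + 2 * ((d - d1) div 2) = b0 + d" using False odd od1 by presburger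
        ultimately show ?thesis using yd1 by simp
      qed
    qed
  qed
  have ycyc: "x $ c j = 0" for j
  proof -
    have "c j = c (b0 + (j + g - b0) mod g)"
    proof -
      have "(b0 + (j + g - b0) mod g) mod g = (b0 + (j + g - b0)) mod g" by (simp add: mod_add_right_eq)
      also have "b0 + (j + g - b0) = j + g" using b0g by simp
      finally show ?thesis using c_eq by simp
    qed
    thus ?thesis using yd[of "(j + g - b0) mod g"] g_pos by simp
  qed
  have xp0: "x $ p0 = 0"
  proof -
    define u where "u = c b0"
    have u: "u = c (Suc (b0 + g - 1))" unfolding u_def using c_add[of b0] g_pos by (simp add: Suc_diff_le)
    have "(Mx *\<^sub>v x) $ u = (\<Sum>p\<in>PN u. s u p * x $ p)"
      unfolding u cyc_row[OF xc] ycyc by simp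
    also have "\<dots> = s u p0 * x $ p0 + (\<Sum>p\<in>PN u - {p0}. s u p * x $ p)"
      by (rule sum.remove[OF PN_fin]) (use p0 u_def in simp)
    also have "(\<Sum>p\<in>PN u - {p0}. s u p * x $ p) = 0"
      by (rule sum.neutral) (use van PN_iff in auto)
    finally have "s u p0 * x $ p0 = 0" using kernelD[OF x, of u] c_lt u_def by simp
    moreover have "s u p0 \<noteq> 0" using s_nz p0 unfolding PN_def u_def by auto
    ultimately show ?thesis by simp
  qed
  show ?thesis
  proof (rule eq_vecI)
    show "dim_vec x = dim_vec (0\<^sub>v n)" using xc by simp
    fix u assume "u < dim_vec (0\<^sub>v n)"
    hence un: "u < n" by simp
    from vertex_cases[OF un] have "x $ u = 0"
    proof
      assume "u \<in> Pd" thus ?thesis using van xp0 by (cases "u = p0") auto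
    next
      assume "\<exists>i. u = c (Suc i)" thus ?thesis using ycyc by auto
    qed
    thus "x $ u = 0\<^sub>v n $ u" using un by simp
  qed
qed

lemma ub1:
  assumes b0: "b0 \<in> MP" and p0: "p0 \<in> PN (c b0)" and H: "odd g \<or> (\<exists>a1\<in>MP. even a1 \<noteq> even b0)"
  shows "kernel_dim Mx \<le> n - g - 1"
proof -
  have p0P: "p0 \<in> Pd" using p0 PN_iff by auto
  have "kernel_dim Mx \<le> card (Pd - {p0})"
  proof (rule kernel_dim_upper[OF Mx_carrier])
    show "Pd - {p0} \<subseteq> {..<n}" unfolding Pd_def by auto
    fix x assume "x \<in> mat_kernel Mx" "\<forall>t\<in>Pd - {p0}. x $ t = 0"
    thus "x = 0\<^sub>v n" using ub_core[OF b0 p0] H by blast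
  qed
  also have "card (Pd - {p0}) = n - g - 1" using p0P Pd_fin card_Pd by simp
  finally show ?thesis .
qed

lemma ub2:
  assumes b0: "b0 \<in> MP" and p0: "p0 \<in> PN (c b0)"
  shows "kernel_dim Mx \<le> n - g"
proof -
  have p0P: "p0 \<in> Pd" using p0 PN_iff by auto
  have "kernel_dim Mx \<le> card (insert (c (Suc b0)) (Pd - {p0}))"
  proof (rule kernel_dim_upper[OF Mx_carrier])
    show "insert (c (Suc b0)) (Pd - {p0}) \<subseteq> {..<n}" unfolding Pd_def using c_lt by auto
    fix x assume "x \<in> mat_kernel Mx" "\<forall>t\<in>insert (c (Suc b0)) (Pd - {p0}). x $ t = 0"
    thus "x = 0\<^sub>v n" using ub_core[OF b0 p0] by blast
  qed
  also have "card (insert (c (Suc b0)) (Pd - {p0})) = n - g"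
  proof -
    have "c (Suc b0) \<notin> Pd - {p0}" using c_notin_Pd by simp
    hence "card (insert (c (Suc b0)) (Pd - {p0})) = Suc (card (Pd - {p0}))" using Pd_fin by simp
    moreover have "card Pd \<ge> 1" using p0P Pd_fin by (metis One_nat_def Suc_leI card_gt_0_iff empty_iff)
    ultimately show ?thesis using p0P Pd_fin card_Pd by simp
  qed
  finally show ?thesis .
qed

end


context cug begin

definition rep where "rep u = (SOME q. q \<in> PN u)"
definition Rset where "Rset = rep ` (c ` MP)"
definition idx where "idx v = (THE j. j < g \<and> cs ! j = v)"
definition off where "off a j = (j + (g - a)) mod g"

lemma idx_c: "idx (c j) = j mod g"
  unfolding idx_def
proof (rule the_equality)
  show "j mod g < g \<and> cs ! (j mod g) = c j" unfolding c_def using g_pos by simp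
  fix k assume "k < g \<and> cs ! k = c j"
  moreover have "j mod g < g" using g_pos by simp
  ultimately show "k = j mod g" unfolding c_def using dist nth_eq_iff_index_eq by blast
qed

lemma even_mod_g: "even g \<Longrightarrow> even (x mod g) \<longleftrightarrow> even x"
proof -
  assume "even g"
  hence "x mod g mod 2 = x mod 2" by (intro mod_mod_cancel) simp
  thus ?thesis by (simp add: even_iff_mod_2_eq_zero)
qed

lemma off_par: "even g \<Longrightarrow> a < g \<Longrightarrow> even (off a j) \<longleftrightarrow> (even j \<longleftrightarrow> even a)"
  unfolding off_def by (simp add: even_mod_g)

lemma off_lt: "off a j < g" unfolding off_def using g_pos by simp

lemma off_add: "a < g \<Longrightarrow> (a + off a j) mod g = j mod g"
proof -
  assume a: "a < g"
  have "(a + off a j) mod g = (a + (j + (g - a))) mod g" unfolding off_def by (simp add: mod_add_right_eq)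
  also have "a + (j + (g - a)) = j + g" using a by simp
  finally show ?thesis by simp
qed

lemma off_c: "a < g \<Longrightarrow> c (a + off a j) = c j" using off_add c_eq by simp

lemma off_mod: "off a (j mod g) = off a j"
  unfolding off_def by (simp add: mod_add_left_eq)

lemma off_Suc: "off a (Suc j) = (if Suc (off a j) = g then 0 else Suc (off a j))"
  unfolding off_def by (simp add: mod_Suc)

lemma f_eq: assumes "i mod g = j mod g" shows "f i = f j"
proof -
  have "Suc i mod g = Suc j mod g" using assms by (simp add: mod_Suc)
  hence "c (Suc i) = c (Suc j)" "c i = c j" using c_eq assms by auto
  thus ?thesis unfolding f_def by simp
qed

lemma rep_PN: "PN u \<noteq> {} \<Longrightarrow> rep u \<in> PN u"
  unfolding rep_def by (rule someI_ex) auto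

lemma Pd_major: "p \<in> Pd \<Longrightarrow> \<exists>e\<in>MP. att p = c e"
proof -
  assume p: "p \<in> Pd"
  from att[OF p] obtain e where e: "e < g" "att p = c e" using in_cs by auto
  have "p \<in> PN (c e)" using PN_iff p e by simp
  thus ?thesis using MP_iff e by auto
qed

lemma Rset_Pd: "Rset \<subseteq> Pd"
  unfolding Rset_def using rep_PN MP_iff PN_iff by auto

lemma rep_att_R: "p \<in> Pd \<Longrightarrow> rep (att p) \<in> Rset"
proof -
  assume "p \<in> Pd"
  then obtain e where "e \<in> MP" "att p = c e" using Pd_major by blast
  thus ?thesis unfolding Rset_def by auto
qed

lemma rep_att_PN: "p \<in> Pd \<Longrightarrow> rep (att p) \<in> PN (att p)"
  using rep_PN PN_iff by blast

lemma cyc_nbr: "set cs \<inter> {w. E (c (Suc i)) w} = {c i, c (i + 2)}"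
  unfolding nbr_c PN_def Pd_def using c_in by auto

end



context cug begin

definition wv where "wv p = vec n (\<lambda>v. if v = p then s (att p) p
   else if v = rep (att p) then - s (att p) (rep (att p)) else 0)"

lemma Pd_lt: "p \<in> Pd \<Longrightarrow> p < n" unfolding Pd_def by simp
lemma Pd_notin: "p \<in> Pd \<Longrightarrow> p \<notin> set cs" unfolding Pd_def by simp

lemma wv_ker: assumes p: "p \<in> Pd - Rset" shows "wv p \<in> mat_kernel Mx"
proof -
  define u0 where "u0 = att p"
  define r where "r = rep u0"
  have pP: "p \<in> Pd" using p by simp
  have rPN: "r \<in> PN u0" unfolding r_def u0_def by (rule rep_att_PN[OF pP])
  hence rP: "r \<in> Pd" and ar: "att r = u0" using PN_iff by auto
  have rp: "r \<noteq> p" using rep_att_R[OF pP] p unfolding r_def u0_def by auto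
  have pPN: "p \<in> PN u0" using PN_iff pP u0_def by simp
  have wc: "wv p \<in> carrier_vec n" unfolding wv_def by simp
  have wv_at: "v < n \<Longrightarrow> wv p $ v = (if v = p then s u0 p else if v = r then - s u0 r else 0)" for v
    unfolding wv_def u0_def r_def by simp
  show ?thesis
  proof (rule kernelI[OF wc])
    fix u assume un: "u < n"
    from vertex_cases[OF un] show "(Mx *\<^sub>v wv p) $ u = 0"
    proof
      assume uP: "u \<in> Pd"
      have "att u \<in> set cs" using att[OF uP] by simp
      hence "att u \<noteq> p" "att u \<noteq> r" using Pd_notin pP rP by auto
      moreover have "att u < n" using att[OF uP] set_cs_sub by auto
      ultimately show ?thesis unfolding pend_row[OF uP wc] using wv_at by simp
    next
      assume "\<exists>i. u = c (Suc i)"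
      then obtain i where ui: "u = c (Suc i)" by auto
      have z1: "wv p $ c i = 0" "wv p $ c (i + 2) = 0"
        using wv_at[OF c_lt] c_notin_Pd pP rP by auto
      have sum0: "(\<Sum>q\<in>PN u. s u q * wv p $ q) = 0"
      proof (cases "u = u0")
        case True
        have "(\<Sum>q\<in>PN u. s u q * wv p $ q) = (\<Sum>q\<in>PN u. (if q = p then 1 else 0) - (if q = r then 1 else 0))"
        proof (rule sum.cong[OF refl])
          fix q assume q: "q \<in> PN u"
          hence qn: "q < n" using PN_iff Pd_lt by auto
          have Eq: "E u q" using q unfolding PN_def by simp
          show "s u q * wv p $ q = (if q = p then 1 else 0) - (if q = r then 1 else 0)"
            using wv_at[OF qn] rp s_sq[OF Eq] True by auto
        qed
        also have "\<dots> = 0" using pPN rPN True PN_fin by (simp add: sum_subtractf)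
        finally show ?thesis .
      next
        case False
        show ?thesis
        proof (rule sum.neutral, intro ballI)
          fix q assume q: "q \<in> PN u"
          hence "att q = u" "q < n" using PN_iff Pd_lt by auto
          hence "q \<noteq> p" "q \<noteq> r" using False ar u0_def by auto
          thus "s u q * wv p $ q = 0" using wv_at \<open>q < n\<close> by simp
        qed
      qed
      show ?thesis unfolding ui cyc_row[OF wc] using z1 sum0 ui by simp
    qed
  qed
qed

lemma wv_diag: "p \<in> Pd \<Longrightarrow> wv p $ p \<noteq> 0"
  unfolding wv_def using Pd_lt s_nz att by (simp add: E_sym)

lemma wv_c: "p \<in> Pd \<Longrightarrow> wv p $ c j = 0"
proof -
  assume pP: "p \<in> Pd"
  have "rep (att p) \<in> Pd" using rep_att_PN[OF pP] PN_iff by auto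
  thus ?thesis unfolding wv_def using c_lt[of j] c_notin_Pd[of j] pP by auto
qed

lemma wv_off: "p \<in> Pd - Rset \<Longrightarrow> t \<in> Pd - Rset \<Longrightarrow> t \<noteq> p \<Longrightarrow> wv p $ t = 0"
  unfolding wv_def using rep_att_R Pd_lt by auto

end


context cug begin

primrec vl :: "nat \<Rightarrow> nat \<Rightarrow> complex" where
  "vl a 0 = 1"
| "vl a (Suc j) = (if PN (c (a + 2 * j + 2)) \<noteq> {} then 0 else - f (a + 2 * j + 1) * f (a + 2 * j + 2) * vl a j)"

definition Y where "Y a d = (if odd d then vl a (d div 2) else 0)"
definition X where "X a v = (if v \<in> set cs then Y a (off a (idx v)) else 0)"
definition cycv where "cycv a u = (\<Sum>w\<in>set cs \<inter> {w. E u w}. s u w * X a w)"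
definition zv where "zv a = vec n (\<lambda>v. if v \<in> set cs then X a v
    else if v \<in> Pd \<and> v = rep (att v) then - s (att v) v * cycv a (att v) else 0)"

lemma X_c: "X a (c j) = Y a (off a j)"
  unfolding X_def idx_c off_mod using c_in by simp

lemma cycv_c: "cycv a (c (Suc i)) = f i * X a (c i) + f (Suc i) * X a (c (i + 2))"
  unfolding cycv_def cyc_nbr using c_ne2[of i] f_left f_right by simp

lemma zv_c: "zv a $ c j = X a (c j)"
  unfolding zv_def using c_lt c_in by simp

lemma zv_ker:
  assumes a: "a \<in> MP" and ev: "even g" and par: "\<forall>e\<in>MP. even e = even a"
  shows "zv a \<in> mat_kernel Mx"
proof -
  have ag: "a < g" using a MP_iff by simp
  have zc: "zv a \<in> carrier_vec n" unfolding zv_def by simp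
  show ?thesis
  proof (rule kernelI[OF zc])
    fix u assume un: "u < n"
    from vertex_cases[OF un] show "(Mx *\<^sub>v zv a) $ u = 0"
    proof
      assume uP: "u \<in> Pd"
      obtain e where e: "e \<in> MP" "att u = c e" using Pd_major[OF uP] by blast
      have "even (off a e)" using off_par[OF ev ag] par e by simp
      hence "X a (att u) = 0" unfolding e X_c Y_def by simp
      thus ?thesis unfolding pend_row[OF uP zc] e zv_c by simp
    next
      assume "\<exists>i. u = c (Suc i)"
      then obtain i where ui: "u = c (Suc i)" by auto
      have row: "(Mx *\<^sub>v zv a) $ u = f i * X a (c i) + f (Suc i) * X a (c (i + 2)) + (\<Sum>q\<in>PN u. s u q * zv a $ q)"
        unfolding ui cyc_row[OF zc] zv_c f_left f_right ..
      show ?thesis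
      proof (cases "PN u = {}")
        case False
        define r where "r = rep u"
        have rPN: "r \<in> PN u" unfolding r_def using rep_PN[OF False] .
        hence rP: "r \<in> Pd" and ar: "att r = u" using PN_iff by auto
        have Er: "E u r" using rPN unfolding PN_def by simp
        have zr: "zv a $ r = - s u r * cycv a u"
          unfolding zv_def using rP ar Pd_lt Pd_notin r_def by simp
        have "(\<Sum>q\<in>PN u. s u q * zv a $ q) = s u r * zv a $ r + (\<Sum>q\<in>PN u - {r}. s u q * zv a $ q)"
          by (rule sum.remove[OF PN_fin rPN])
        also have "(\<Sum>q\<in>PN u - {r}. s u q * zv a $ q) = 0"
        proof (rule sum.neutral, intro ballI)
          fix q assume q: "q \<in> PN u - {r}"
          hence qP: "q \<in> Pd" and aq: "att q = u" and qr: "q \<noteq> r" using PN_iff by auto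
          have "zv a $ q = 0" unfolding zv_def using qP aq qr Pd_lt Pd_notin r_def by simp
          thus "s u q * zv a $ q = 0" by simp
        qed
        also have "s u r * zv a $ r = - (s u r * s u r) * cycv a u" unfolding zr by simp
        also have "\<dots> = - cycv a u" using s_sq[OF Er] by simp
        finally show ?thesis unfolding row using cycv_c ui by simp
      next
        case True
        define d where "d = off a (Suc i)"
        have XY: "X a (c i) = Y a (off a i)" "X a (c (i + 2)) = Y a (off a (i + 2))" using X_c by auto
        have main: "f i * Y a (off a i) + f (Suc i) * Y a (off a (i + 2)) = 0"
        proof (cases "even d")
          case False
          have "even (off a i)" "even (off a (i + 2))"
            using off_par[OF ev ag, of i] off_par[OF ev ag, of "i + 2"] off_par[OF ev ag, of "Suc i"] False
            unfolding d_def by auto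
          thus ?thesis unfolding Y_def by simp
        next
          case True
          have d0: "d \<noteq> 0"
          proof
            assume "d = 0"
            hence "c (Suc i) = c a" using off_c[OF ag, of "Suc i"] unfolding d_def by simp
            hence "PN u \<noteq> {}" using a MP_iff ui by simp
            with \<open>PN u = {}\<close> show False by simp
          qed
          have dg: "d < g" unfolding d_def by (rule off_lt)
          have d1g: "Suc d < g" using dg True ev d0 by presburger
          have oi: "off a i = d - 1" using off_Suc[of a i] d0 unfolding d_def by (auto split: if_splits)
          have oi2: "off a (i + 2) = Suc d" using off_Suc[of a "Suc i"] d1g unfolding d_def by (simp add: numeral_2_eq_2)
          obtain j where dj: "d = 2 * j + 2" using True d0 by (metis dvd_def mult_eq_0_iff nat.exhaust numeral_2_eq_2 add_2_eq_Suc' add.commute mult_Suc_right)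
          have Y1: "Y a (off a i) = vl a j" unfolding oi dj Y_def by simp
          have cu: "c (a + 2 * j + 2) = u" using off_c[OF ag, of "Suc i"] ui unfolding d_def[symmetric] dj by (simp add: add.assoc)
          have Y2: "Y a (off a (i + 2)) = - f (a + 2 * j + 1) * f (a + 2 * j + 2) * vl a j"
          proof -
            have "Suc d = 2 * Suc j + 1" using dj by simp
            hence "Y a (Suc d) = vl a (Suc j)" unfolding Y_def by simp
            thus ?thesis unfolding oi2 using cu \<open>PN u = {}\<close> by simp
          qed
          have m: "(a + d) mod g = Suc i mod g" using off_add[OF ag, of "Suc i"] unfolding d_def .
          have fi: "f i = f (a + 2 * j + 1)"
          proof (rule f_eq)
            have "Suc (a + 2 * j + 1) mod g = Suc i mod g" using m dj by (simp add: add.assoc)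
            thus "i mod g = (a + 2 * j + 1) mod g" using mod_suc_cancel by metis
          qed
          have fi2: "f (Suc i) = f (a + 2 * j + 2)"
            by (rule f_eq) (use m dj in \<open>simp add: add.assoc\<close>)
          have "f i * Y a (off a i) + f (Suc i) * Y a (off a (i + 2))
              = f i * vl a j - f i * vl a j * (f (Suc i) * f (Suc i))"
            unfolding Y1 Y2 fi fi2 by (simp add: algebra_simps)
          also have "\<dots> = 0" unfolding f_sq by simp
          finally show ?thesis .
        qed
        show ?thesis unfolding row XY main using True by simp
      qed
    qed
  qed
qed

lemma zv_diag: "a \<in> MP \<Longrightarrow> zv a $ c (Suc a) = 1"
proof -
  assume a: "a \<in> MP"
  hence ag: "a < g" using MP_iff by simp
  have "off a (Suc a) = (g + 1) mod g" unfolding off_def using ag by simp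
  also have "\<dots> = 1" using g3 by (simp add: mod_Suc)
  finally show ?thesis unfolding zv_c X_c Y_def by simp
qed

lemma zv_off:
  assumes a: "a \<in> MP" and a': "a' \<in> MP" and ne: "a' \<noteq> a" and ev: "even g" and par: "\<forall>e\<in>MP. even e = even a"
  shows "zv a $ c (Suc a') = 0"
proof -
  have ag: "a < g" and a'g: "a' < g" using a a' MP_iff by auto
  define e where "e = off a a'"
  have eev: "even e" unfolding e_def using off_par[OF ev ag] par a' by simp
  have e0: "e \<noteq> 0"
  proof
    assume "e = 0"
    hence "c a = c a'" using off_c[OF ag, of a'] unfolding e_def by simp
    hence "a = a'" using c_eq ag a'g by simp
    with ne show False by simp
  qed
  have eg: "e < g" unfolding e_def by (rule off_lt)
  have e1g: "Suc e < g" using eg eev ev e0 by presburger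
  have os: "off a (Suc a') = Suc e" using off_Suc[of a a'] e1g unfolding e_def by simp
  obtain j where ej: "e = 2 * j + 2" using eev e0 by (metis dvd_def mult_eq_0_iff nat.exhaust numeral_2_eq_2 add_2_eq_Suc' add.commute mult_Suc_right)
  have "c (a + 2 * j + 2) = c a'" using off_c[OF ag, of a'] unfolding e_def[symmetric] ej by (simp add: add.assoc)
  hence pn: "PN (c (a + 2 * j + 2)) \<noteq> {}" using a' MP_iff by simp
  have "Suc e = 2 * Suc j + 1" using ej by simp
  hence "Y a (Suc e) = vl a (Suc j)" unfolding Y_def by simp
  also have "\<dots> = 0" using pn by simp
  finally show ?thesis unfolding zv_c X_c os .
qed

lemma zv_pd: "p \<in> Pd - Rset \<Longrightarrow> zv a $ p = 0"
proof -
  assume p: "p \<in> Pd - Rset"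
  have "rep (att p) \<in> Rset" using rep_att_R p by simp
  hence "p \<noteq> rep (att p)" using p by auto
  thus ?thesis unfolding zv_def using p Pd_lt Pd_notin by simp
qed

end


context cug begin

lemma lb:
  assumes ev: "even g" and par: "\<forall>e\<in>MP. \<forall>e'\<in>MP. even e = even e'"
  shows "n - g \<le> kernel_dim Mx"
proof -
  define C where "C = (\<lambda>a. c (Suc a)) ` MP"
  define T where "T = (Pd - Rset) \<union> C"
  define W where "W t = (if t \<in> Pd then wv t else zv (THE a. a \<in> MP \<and> c (Suc a) = t))" for t
  have the_a: "(THE a'. a' \<in> MP \<and> c (Suc a') = c (Suc a)) = a" if a: "a \<in> MP" for a
  proof (rule the_equality)
    show "a \<in> MP \<and> c (Suc a) = c (Suc a)" using a by simp
    fix a' assume a': "a' \<in> MP \<and> c (Suc a') = c (Suc a)"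
    hence "Suc a' mod g = Suc a mod g" using c_eq by simp
    hence "a' mod g = a mod g" by (rule mod_suc_cancel)
    thus "a' = a" using a a' MP_iff by simp
  qed
  have WC: "W (c (Suc a)) = zv a" if "a \<in> MP" for a
    unfolding W_def using c_notin_Pd the_a[OF that] by simp
  have WP: "W p = wv p" if "p \<in> Pd" for p unfolding W_def using that by simp
  have CnP: "t \<in> C \<Longrightarrow> t \<notin> Pd" for t unfolding C_def using c_notin_Pd by auto
  have "card T \<le> kernel_dim Mx"
  proof (rule kernel_dim_lower[OF Mx_carrier, of T W])
    show "T \<subseteq> {..<n}" unfolding T_def C_def Pd_def using c_lt by auto
    fix t assume t: "t \<in> T"
    show "W t \<in> mat_kernel Mx"
    proof (cases "t \<in> C")
      case True
      then obtain a where a: "a \<in> MP" "t = c (Suc a)" unfolding C_def by auto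
      show ?thesis unfolding a WC[OF a(1)] using zv_ker[OF a(1) ev] par a by blast
    next
      case False
      hence "t \<in> Pd - Rset" using t unfolding T_def by simp
      thus ?thesis using wv_ker WP by simp
    qed
    show "W t $ t \<noteq> 0"
    proof (cases "t \<in> C")
      case True
      then obtain a where a: "a \<in> MP" "t = c (Suc a)" unfolding C_def by auto
      show ?thesis unfolding a WC[OF a(1)] zv_diag[OF a(1)] by simp
    next
      case False
      hence "t \<in> Pd" using t unfolding T_def by simp
      thus ?thesis using wv_diag WP by simp
    qed
    fix t' assume t': "t' \<in> T" and ne: "t' \<noteq> t"
    show "W t $ t' = 0"
    proof (cases "t \<in> C")
      case True
      then obtain a where a: "a \<in> MP" "t = c (Suc a)" unfolding C_def by auto
      show ?thesis
      proof (cases "t' \<in> C")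
        case True
        then obtain a' where a': "a' \<in> MP" "t' = c (Suc a')" unfolding C_def by auto
        have "a' \<noteq> a" using ne a a' by auto
        thus ?thesis unfolding a(2) a'(2) WC[OF a(1)] using zv_off[OF a(1) a'(1) _ ev] par a by blast
      next
        case False
        hence "t' \<in> Pd - Rset" using t' unfolding T_def by simp
        thus ?thesis unfolding a(2) WC[OF a(1)] by (rule zv_pd)
      qed
    next
      case False
      hence tP: "t \<in> Pd - Rset" using t unfolding T_def by simp
      show ?thesis
      proof (cases "t' \<in> C")
        case True
        then obtain a' where a': "a' \<in> MP" "t' = c (Suc a')" unfolding C_def by auto
        show ?thesis unfolding a'(2) using tP wv_c WP[of t] by simp
      next
        case False
        hence "t' \<in> Pd - Rset" using t' unfolding T_def by simp
        thus ?thesis using wv_off tP ne WP by simp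
      qed
    qed
  qed
  moreover have "card T = n - g"
  proof -
    have injR: "inj_on (rep \<circ> c) MP"
    proof
      fix a a' assume a: "a \<in> MP" and a': "a' \<in> MP" and eq: "(rep \<circ> c) a = (rep \<circ> c) a'"
      have "PN (c a) \<noteq> {}" "PN (c a') \<noteq> {}" using a a' MP_iff by auto
      hence r1: "rep (c a) \<in> PN (c a)" and r2: "rep (c a') \<in> PN (c a')" using rep_PN by auto
      have "att (rep (c a)) = c a" using conjunct2[OF PN_iff[THEN iffD1, OF r1]] .
      moreover have "att (rep (c a')) = c a'" using conjunct2[OF PN_iff[THEN iffD1, OF r2]] .
      moreover have "rep (c a) = rep (c a')" using eq unfolding comp_def .
      ultimately show "a = a'" using c_eq a a' MP_iff by (metis mod_less)
    qed
    have cardR: "card Rset = card MP" unfolding Rset_def image_comp using card_image[OF injR] .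
    have injC: "inj_on (\<lambda>a. c (Suc a)) MP"
    proof
      fix a a' assume a: "a \<in> MP" and a': "a' \<in> MP" and eq: "c (Suc a) = c (Suc a')"
      hence "Suc a mod g = Suc a' mod g" using c_eq by simp
      hence "a mod g = a' mod g" by (rule mod_suc_cancel)
      thus "a = a'" using a a' MP_iff by simp
    qed
    have cardC: "card C = card MP" unfolding C_def using card_image[OF injC] .
    have finR: "finite Rset" by (rule finite_subset[OF Rset_Pd Pd_fin])
    have "card (Pd - Rset) = card Pd - card Rset" using Rset_Pd finR by (simp add: card_Diff_subset)
    moreover have "card Rset \<le> card Pd" using Rset_Pd Pd_fin by (simp add: card_mono)
    moreover have "card T = card (Pd - Rset) + card C"
    proof (unfold T_def, rule card_Un_disjoint)
      show "finite (Pd - Rset)" using Pd_fin by simp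
      show "finite C" unfolding C_def using MP_fin by simp
      show "(Pd - Rset) \<inter> C = {}" using CnP by blast
    qed
    ultimately show ?thesis using cardR cardC card_Pd by simp
  qed
  ultimately show ?thesis by simp
qed

lemma part2:
  assumes ne: "set cs \<noteq> {0..<n}"
  shows "nullity n E sg = n - g \<longleftrightarrow> even g \<and> (\<forall>i < length (major_positions n E cs). odd (gap n E cs i))"
proof -
  have MPne: "MP \<noteq> {}" by (rule MP_ne[OF ne])
  define b0 where "b0 = ms ! 0"
  have b0: "b0 \<in> MP" unfolding b0_def by (rule b0_MP[OF MPne])
  then obtain p0 where p0: "p0 \<in> PN (c b0)" using MP_iff by auto
  have p0P: "p0 \<in> Pd" using p0 PN_iff by auto
  have ng1: "n - g \<ge> 1" using card_Pd p0P Pd_fin by (metis One_nat_def Suc_leI card_gt_0_iff empty_iff)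
  have rhs: "(even g \<and> (\<forall>i < length (major_positions n E cs). odd (gap n E cs i)))
      \<longleftrightarrow> (even g \<and> (\<forall>a\<in>MP. even a = even b0))"
    using cond_iff[OF MPne] unfolding b0_def by blast
  show ?thesis unfolding rhs nullity_kernel
  proof (cases "even g \<and> (\<forall>a\<in>MP. even a = even b0)")
    case True
    have "n - g \<le> kernel_dim Mx" by (rule lb) (use True in auto)
    moreover have "kernel_dim Mx \<le> n - g" by (rule ub2[OF b0 p0])
    ultimately show "(kernel_dim Mx = n - g) = (even g \<and> (\<forall>a\<in>MP. even a = even b0))" using True by simp
  next
    case False
    hence "odd g \<or> (\<exists>a1\<in>MP. even a1 \<noteq> even b0)" by blast
    hence "kernel_dim Mx \<le> n - g - 1" by (rule ub1[OF b0 p0])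
    hence "kernel_dim Mx \<noteq> n - g" using ng1 by linarith
    thus "(kernel_dim Mx = n - g) = (even g \<and> (\<forall>a\<in>MP. even a = even b0))" using False by blast
  qed
qed

end

theorem theorem5p2:
  fixes n :: nat and E :: "nat \<Rightarrow> nat \<Rightarrow> bool" and sg :: "nat \<Rightarrow> nat \<Rightarrow> real"
    and cs :: "nat list" and g :: nat
  assumes "signed_graph n E sg"
    and "canonical_with n E cs"
    and "g = length cs"
  shows "(set cs = {0..<n} \<longrightarrow>
           (nullity n E sg = n - g \<longleftrightarrow>
              odd g \<or> (balanced_cycle sg cs \<and> g mod 4 = 2)
                    \<or> (\<not> balanced_cycle sg cs \<and> g mod 4 = 0)))
       \<and> (set cs \<noteq> {0..<n} \<longrightarrow>
           (nullity n E sg = n - g \<longleftrightarrow>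
              even g \<and> (\<forall>i < length (major_positions n E cs). odd (gap n E cs i))))"
proof -
  interpret cug n E sg cs by (unfold_locales) (use assms in auto)
  show ?thesis unfolding assms(3) using part1 part2 by blast
qed

end
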